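(* The map $L\mapsto\Psi_L$ restricts to a $\Lambda$-module isomorphism $T^r(V^* )^{\mathrm{OSp}(V)}\xrightarrow{\sim}\Gamma_r^{\mathrm{OSp}(V)}$, where $T^r(V^* )^{\mathrm{OSp}(V)}$ is the set of $\mathrm{OSp}(V)$-invariants of $T^r(V^* )$ and $\Gamma_r^{\mathrm{OSp}(V)}$ is the set of elements of $\Gamma_r$ fixed by $\hat L_g$ for all $g\in\mathrm{OSp}(V)$.
   Context: $\Lambda=\varinjlim\wedge(\mathbb{C}^N)$ is the infinite Grassmann algebra ($\mathbb{Z}_2$-graded, supercommutative; modules are $\mathbb{Z}_2$-graded with $\lambda v=(-1)^{[\lambda][v]}v\lambda$). $V_{\mathbb{C}}$ is a complex superspace of superdimension $(m|2n)$ with nondegenerate even supersymmetric form, $V=V_{\mathbb{C}}\otimes\Lambda$ with the $\Lambda$-bilinearly extended form, $\mathrm{GL}(V)$ the group of invertible even $\Lambda$-linear endomorphisms of $V$, $\mathrm{OSp}(V)$ the subgroup preserving the form, $\mathbf{E}=\mathrm{End}_\Lambda(V)_{\bar0}$. $V^*=\mathrm{Hom}_\Lambda(V,\Lambda)$ with $(g\bar v)(w)=\bar v(g^{-1}w)$; $T^r(V^* )=(V^* )^{\otimes_\Lambda r}$ with diagonal action $\rho_r^*$, identified with $T^r(V)^*$ via the sign-twisted pairing $\gamma(\bar v_1\otimes\cdots\otimes\bar v_r\otimes w_1\otimes\cdots\otimes w_r)=(-1)^J\prod_i\bar v_i(w_i)$, $J=\sum_\mu[w_\mu]([\bar v_{\mu+1}]+\cdots+[\bar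 v_r])$. $\mathcal{P}^r[\mathbf{E}]$ is the space of polynomial functions of degree $r$ on $\mathbf{E}=(\mathrm{End}_{\mathbb{C}}(V_{\mathbb{C}})\otimes\Lambda)_{\bar0}$ (in coordinates $\sum_k b_k\lambda_k$ w.r.t. a homogeneous basis $b_k$ of $\mathrm{End}_{\mathbb{C}}(V_{\mathbb{C}})$: $\Lambda$-linear combinations of degree-$r$ monomials in the $\lambda_k$). $\Psi_L(X,w)=L(Xw_1\otimes\cdots\otimes Xw_r)$ for $w=w_1\otimes\cdots\otimes w_r$. $\hat L_g=L_g\otimes\mathrm{id}$ with $(L_gf)(X)=f(g^{-1}X)$; $\hat R_g=R_g\otimes\rho_r^*(g)$ with $(R_gf)(X)=f(Xg)$. $\Gamma_r=(\mathcal{P}^r[\mathbf{E}]\otimes_\Lambda T^r(V^* ))^{\hat R(\mathrm{GL}(V))}$. *)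

theory Defs
  imports Complex_Main
begin

section \<open>The infinite Grassmann algebra Lambda\<close>

text \<open>An element of Lambda is a finite complex combination of monomials xi_S
 (S a finite set of generator indices, product taken in increasing order).
 Represented as a coefficient function on sets; the carrier picks out the
 genuine elements.\<close>

type_synonym grass = "nat set \<Rightarrow> complex"
type_synonym vec = "nat \<Rightarrow> grass"
type_synonym mat = "nat \<Rightarrow> nat \<Rightarrow> grass"

definition gcarrier :: "grass set" where
  "gcarrier = {a. finite {S. a S \<noteq> 0} \<and> (\<forall>S. a S \<noteq> 0 \<longrightarrow> finite S)}"

definition gzero :: grass where "gzero = (\<lambda>S. 0)"
definition gone :: grass where "gone = (\<lambda>S. if S = {} then 1 else 0)"
definition gadd :: "grass \<Rightarrow> grass \<Rightarrow> grass" where "gadd a b = (\<lambda>S. a S + b S)"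
definition gscale :: "complex \<Rightarrow> grass \<Rightarrow> grass" where "gscale c a = (\<lambda>S. c * a S)"
definition gsum :: "('i \<Rightarrow> grass) \<Rightarrow> 'i set \<Rightarrow> grass" where
  "gsum f A = (\<lambda>S. \<Sum>k\<in>A. f k S)"

text \<open>xi_S * xi_T = gsgn S T * xi_(S union T) for disjoint S, T.\<close>
definition gsgn :: "nat set \<Rightarrow> nat set \<Rightarrow> complex" where
  "gsgn S T = (-1) ^ card {(s, t). s \<in> S \<and> t \<in> T \<and> t < s}"

definition gmul :: "grass \<Rightarrow> grass \<Rightarrow> grass" where
  "gmul a b = (\<lambda>U. if finite U then (\<Sum>S\<in>Pow U. gsgn S (U - S) * a S * b (U - S)) else 0)"

text \<open>Grade involution applied iff the flag is True: a |-> a_even - a_odd.\<close>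
definition galpha :: "bool \<Rightarrow> grass \<Rightarrow> grass" where
  "galpha p a = (if p then (\<lambda>S. (-1) ^ card S * a S) else a)"

definition ghomog :: "bool \<Rightarrow> grass \<Rightarrow> bool" where
  "ghomog q a \<longleftrightarrow> (\<forall>S. a S \<noteq> 0 \<longrightarrow> odd (card S) = q)"

fun gprod_list :: "grass list \<Rightarrow> grass" where
  "gprod_list [] = gone"
| "gprod_list (a # as) = gmul a (gprod_list as)"

section \<open>The superspace V = V_C (x) Lambda, sdim V_C = (m|2n)\<close>

text \<open>Homogeneous basis e_0..e_(N-1), N = m+2n; e_i is odd iff i >= m.
 A vector v = sum_i e_i v_i is given by its coordinates v_i in Lambda.\<close>

definition spar :: "nat \<Rightarrow> nat \<Rightarrow> bool" where "spar m i \<longleftrightarrow> m \<le> i"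

definition svec :: "nat \<Rightarrow> nat \<Rightarrow> vec set" where
  "svec m n = {v. (\<forall>i<m+2*n. v i \<in> gcarrier) \<and> (\<forall>i. m+2*n \<le> i \<longrightarrow> v i = gzero)}"

definition basisvec :: "nat \<Rightarrow> vec" where
  "basisvec j = (\<lambda>i. if i = j then gone else gzero)"

text \<open>Matrices: X e_j = sum_i e_i X_ij.\<close>
definition smat :: "nat \<Rightarrow> nat \<Rightarrow> mat set" where
  "smat m n = {X. \<forall>i j. if i < m+2*n \<and> j < m+2*n then X i j \<in> gcarrier else X i j = gzero}"

definition Emat :: "nat \<Rightarrow> nat \<Rightarrow> mat set" where
  "Emat m n = {X \<in> smat m n. \<forall>i<m+2*n. \<forall>j<m+2*n. ghomog (spar m i \<noteq> spar m j) (X i j)}"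

definition matmul :: "nat \<Rightarrow> nat \<Rightarrow> mat \<Rightarrow> mat \<Rightarrow> mat" where
  "matmul m n X Y = (\<lambda>i j. gsum (\<lambda>k. gmul (X i k) (Y k j)) {..<m+2*n})"

definition matvec :: "nat \<Rightarrow> nat \<Rightarrow> mat \<Rightarrow> vec \<Rightarrow> vec" where
  "matvec m n X v = (\<lambda>i. gsum (\<lambda>k. gmul (X i k) (v k)) {..<m+2*n})"

definition midm :: "nat \<Rightarrow> nat \<Rightarrow> mat" where
  "midm m n = (\<lambda>i j. if i < m+2*n \<and> i = j then gone else gzero)"

definition GLs :: "nat \<Rightarrow> nat \<Rightarrow> mat set" where
  "GLs m n = {g \<in> Emat m n. \<exists>h \<in> Emat m n. matmul m n g h = midm m n \<and> matmul m n h g = midm m n}"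

definition minv :: "nat \<Rightarrow> nat \<Rightarrow> mat \<Rightarrow> mat" where
  "minv m n g = (THE h. h \<in> Emat m n \<and> matmul m n g h = midm m n \<and> matmul m n h g = midm m n)"

text \<open>b is the Gram matrix of the complex form on V_C in the basis e_i;
 its Lambda-bilinear extension: B(e_k a, e_l c) = (-1)^([a][e_l]) b_kl a c.\<close>

definition form_even :: "nat \<Rightarrow> nat \<Rightarrow> (nat \<Rightarrow> nat \<Rightarrow> complex) \<Rightarrow> bool" where
  "form_even m n b \<longleftrightarrow> (\<forall>k<m+2*n. \<forall>l<m+2*n. spar m k \<noteq> spar m l \<longrightarrow> b k l = 0)"

definition form_supersym :: "nat \<Rightarrow> nat \<Rightarrow> (nat \<Rightarrow> nat \<Rightarrow> complex) \<Rightarrow> bool" where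
  "form_supersym m n b \<longleftrightarrow> (\<forall>k<m+2*n. \<forall>l<m+2*n.
      b k l = (if spar m k \<and> spar m l then -1 else 1) * b l k)"

definition form_nondeg :: "nat \<Rightarrow> nat \<Rightarrow> (nat \<Rightarrow> nat \<Rightarrow> complex) \<Rightarrow> bool" where
  "form_nondeg m n b \<longleftrightarrow> (\<forall>x::nat \<Rightarrow> complex.
      (\<forall>l<m+2*n. (\<Sum>k<m+2*n. x k * b k l) = 0) \<longrightarrow> (\<forall>k<m+2*n. x k = 0))"

definition sform :: "nat \<Rightarrow> nat \<Rightarrow> (nat \<Rightarrow> nat \<Rightarrow> complex) \<Rightarrow> vec \<Rightarrow> vec \<Rightarrow> grass" where
  "sform m n b v w = gsum (\<lambda>(k, l). gscale (b k l) (gmul (galpha (spar m k) (v k)) (w l)))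
      ({..<m+2*n} \<times> {..<m+2*n})"

definition OSp :: "nat \<Rightarrow> nat \<Rightarrow> (nat \<Rightarrow> nat \<Rightarrow> complex) \<Rightarrow> mat set" where
  "OSp m n b = {g \<in> GLs m n. \<forall>v\<in>svec m n. \<forall>w\<in>svec m n.
      sform m n b (matvec m n g v) (matvec m n g w) = sform m n b v w}"

section \<open>T^r(V^*) = T^r(V)^*\<close>

definition tuples :: "nat \<Rightarrow> nat \<Rightarrow> nat \<Rightarrow> nat list set" where
  "tuples m n r = {J. length J = r \<and> set J \<subseteq> {..<m+2*n}}"

definition tpar :: "nat \<Rightarrow> nat list \<Rightarrow> bool" where
  "tpar m J \<longleftrightarrow> odd (length (filter (spar m) J))"

text \<open>w_1 (x) ... (x) w_r = sum_J e_J1 (x) ... (x) e_Jr * tcoef m J [w_1,...,w_r].\<close>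
fun tcoef :: "nat \<Rightarrow> nat list \<Rightarrow> vec list \<Rightarrow> grass" where
  "tcoef m [] [] = gone"
| "tcoef m (j # J) (w # ws) = gmul (galpha (tpar m J) (w j)) (tcoef m J ws)"
| "tcoef m _ _ = gzero"

text \<open>A functional L in T^r(V)^* (right Lambda-linear) is given by its values
 c J = L(e_J1 (x) ... (x) e_Jr) on basis tensors.\<close>
definition TVdual :: "nat \<Rightarrow> nat \<Rightarrow> nat \<Rightarrow> (nat list \<Rightarrow> grass) set" where
  "TVdual m n r = {c. \<forall>J. if J \<in> tuples m n r then c J \<in> gcarrier else c J = gzero}"

definition Leval :: "nat \<Rightarrow> nat \<Rightarrow> nat \<Rightarrow> (nat list \<Rightarrow> grass) \<Rightarrow> vec list \<Rightarrow> grass" where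
  "Leval m n r c ws = gsum (\<lambda>J. gmul (c J) (tcoef m J ws)) (tuples m n r)"

text \<open>rho_r^*(g) L = L o rho_r(g^-1), in coordinates.\<close>
definition rho_dual :: "nat \<Rightarrow> nat \<Rightarrow> nat \<Rightarrow> mat \<Rightarrow> (nat list \<Rightarrow> grass) \<Rightarrow> (nat list \<Rightarrow> grass)" where
  "rho_dual m n r g c = (\<lambda>J. if J \<in> tuples m n r
      then Leval m n r c (map (\<lambda>j. matvec m n (minv m n g) (basisvec j)) J) else gzero)"

definition TVinv :: "nat \<Rightarrow> nat \<Rightarrow> nat \<Rightarrow> (nat \<Rightarrow> nat \<Rightarrow> complex) \<Rightarrow> (nat list \<Rightarrow> grass) set" where
  "TVinv m n r b = {c \<in> TVdual m n r. \<forall>g\<in>OSp m n b. rho_dual m n r g c = c}"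

definition tv_add :: "(nat list \<Rightarrow> grass) \<Rightarrow> (nat list \<Rightarrow> grass) \<Rightarrow> (nat list \<Rightarrow> grass)" where
  "tv_add c d = (\<lambda>J. gadd (c J) (d J))"
definition tv_smul :: "grass \<Rightarrow> (nat list \<Rightarrow> grass) \<Rightarrow> (nat list \<Rightarrow> grass)" where
  "tv_smul a c = (\<lambda>J. gmul a (c J))"

definition monoms :: "nat \<Rightarrow> nat \<Rightarrow> nat \<Rightarrow> (nat \<times> nat) list set" where
  "monoms m n r = {\<kappa>. length \<kappa> = r \<and> set \<kappa> \<subseteq> {..<m+2*n} \<times> {..<m+2*n}}"

text \<open>Functions on E (set to 0 outside E): Lambda-linear combinations of
 degree-r monomials in the coordinates X_ij.\<close>
definition Poly :: "nat \<Rightarrow> nat \<Rightarrow> nat \<Rightarrow> (mat \<Rightarrow> grass) set" where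
  "Poly m n r = {f. \<exists>c. (\<forall>\<kappa>. c \<kappa> \<in> gcarrier) \<and>
     f = (\<lambda>X. if X \<in> Emat m n
            then gsum (\<lambda>\<kappa>. gmul (c \<kappa>) (gprod_list (map (\<lambda>(i, j). X i j) \<kappa>))) (monoms m n r)
            else gzero)}"

text \<open>An element of P^r[E] (x) T^r(V^*) is given by its components F J in P^r[E]
 (w.r.t. the basis dual to the e_J); it represents (X, w) |-> Feval F X w.\<close>
definition TP :: "nat \<Rightarrow> nat \<Rightarrow> nat \<Rightarrow> (nat list \<Rightarrow> mat \<Rightarrow> grass) set" where
  "TP m n r = {F. \<forall>J. if J \<in> tuples m n r then F J \<in> Poly m n r else F J = (\<lambda>X. gzero)}"

definition Feval :: "nat \<Rightarrow> nat \<Rightarrow> nat \<Rightarrow> (nat list \<Rightarrow> mat \<Rightarrow> grass) \<Rightarrow> mat \<Rightarrow> vec list \<Rightarrow> grass" where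
  "Feval m n r F X ws = gsum (\<lambda>J. gmul (F J X) (tcoef m J ws)) (tuples m n r)"

text \<open>(R-hat_g F)(X, w) = F(X g, g^-1 w); (L-hat_g F)(X, w) = F(g^-1 X, w).\<close>
definition Rhat :: "nat \<Rightarrow> nat \<Rightarrow> nat \<Rightarrow> mat \<Rightarrow> (nat list \<Rightarrow> mat \<Rightarrow> grass) \<Rightarrow> (nat list \<Rightarrow> mat \<Rightarrow> grass)" where
  "Rhat m n r g F = (\<lambda>J. if J \<in> tuples m n r
      then (\<lambda>X. if X \<in> Emat m n then Feval m n r F (matmul m n X g)
                   (map (\<lambda>j. matvec m n (minv m n g) (basisvec j)) J) else gzero)
      else (\<lambda>X. gzero))"

definition Lhat :: "nat \<Rightarrow> nat \<Rightarrow> nat \<Rightarrow> mat \<Rightarrow> (nat list \<Rightarrow> mat \<Rightarrow> grass) \<Rightarrow> (nat list \<Rightarrow> mat \<Rightarrow> grass)" where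
  "Lhat m n r g F = (\<lambda>J. if J \<in> tuples m n r
      then (\<lambda>X. if X \<in> Emat m n then F J (matmul m n (minv m n g) X) else gzero)
      else (\<lambda>X. gzero))"

definition Gamma :: "nat \<Rightarrow> nat \<Rightarrow> nat \<Rightarrow> (nat list \<Rightarrow> mat \<Rightarrow> grass) set" where
  "Gamma m n r = {F \<in> TP m n r. \<forall>g\<in>GLs m n. Rhat m n r g F = F}"

definition GammaOSp :: "nat \<Rightarrow> nat \<Rightarrow> nat \<Rightarrow> (nat \<Rightarrow> nat \<Rightarrow> complex) \<Rightarrow> (nat list \<Rightarrow> mat \<Rightarrow> grass) set" where
  "GammaOSp m n r b = {F \<in> Gamma m n r. \<forall>g\<in>OSp m n b. Lhat m n r g F = F}"

definition tp_add :: "(nat list \<Rightarrow> mat \<Rightarrow> grass) \<Rightarrow> (nat list \<Rightarrow> mat \<Rightarrow> grass) \<Rightarrow> (nat list \<Rightarrow> mat \<Rightarrow> grass)" where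
  "tp_add F G = (\<lambda>J X. gadd (F J X) (G J X))"
definition tp_smul :: "grass \<Rightarrow> (nat list \<Rightarrow> mat \<Rightarrow> grass) \<Rightarrow> (nat list \<Rightarrow> mat \<Rightarrow> grass)" where
  "tp_smul a F = (\<lambda>J X. gmul a (F J X))"

text \<open>Psi_L(X, w) = L(X w_1 (x) ... (x) X w_r), in components.\<close>
definition Psi :: "nat \<Rightarrow> nat \<Rightarrow> nat \<Rightarrow> (nat list \<Rightarrow> grass) \<Rightarrow> (nat list \<Rightarrow> mat \<Rightarrow> grass)" where
  "Psi m n r c = (\<lambda>J. if J \<in> tuples m n r
      then (\<lambda>X. if X \<in> Emat m n then Leval m n r c (map (\<lambda>j. matvec m n X (basisvec j)) J) else gzero)
      else (\<lambda>X. gzero))"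

end

theory Submission
  imports Defs "Jordan_Normal_Form.Determinant" "Jordan_Normal_Form.Char_Poly"
begin

definition ginv :: "nat set \<Rightarrow> nat set \<Rightarrow> (nat \<times> nat) set" where
  "ginv S T = {(s, t). s \<in> S \<and> t \<in> T \<and> t < s}"

lemma gsgn_ginv: "gsgn S T = (-1) ^ card (ginv S T)"
  by (simp add: gsgn_def ginv_def)

lemma ginv_sub: "ginv S T \<subseteq> S \<times> T" by (auto simp: ginv_def)

lemma gsgn_union_right:
  assumes "finite S" "finite T" "finite W" "T \<inter> W = {}"
  shows "gsgn S (T \<union> W) = gsgn S T * gsgn S W"
proof -
  have e: "ginv S (T \<union> W) = ginv S T \<union> ginv S W" by (auto simp: ginv_def)
  have d: "ginv S T \<inter> ginv S W = {}" using assms(4) by (auto simp: ginv_def)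
  have f: "finite (ginv S T)" "finite (ginv S W)"
    using ginv_sub[of S T] ginv_sub[of S W] assms by (auto intro: finite_subset)
  show ?thesis unfolding gsgn_ginv e card_Un_disjoint[OF f d] power_add by simp
qed

lemma gsgn_union_left:
  assumes "finite S" "finite T" "finite W" "S \<inter> T = {}"
  shows "gsgn (S \<union> T) W = gsgn S W * gsgn T W"
proof -
  have e: "ginv (S \<union> T) W = ginv S W \<union> ginv T W" by (auto simp: ginv_def)
  have d: "ginv S W \<inter> ginv T W = {}" using assms(4) by (auto simp: ginv_def)
  have f: "finite (ginv S W)" "finite (ginv T W)"
    using ginv_sub[of S W] ginv_sub[of T W] assms by (auto intro: finite_subset)
  show ?thesis unfolding gsgn_ginv e card_Un_disjoint[OF f d] power_add by simp
qed

lemma gsgn_swap: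
  assumes "finite S" "finite T" "S \<inter> T = {}"
  shows "gsgn T S = gsgn S T * (-1) ^ (card S * card T)"
proof -
  have e: "S \<times> T = ginv S T \<union> prod.swap ` ginv T S"
    using assms(3) by (auto simp: ginv_def image_iff)
  have d: "ginv S T \<inter> prod.swap ` ginv T S = {}" by (auto simp: ginv_def)
  have f0: "finite (ginv T S)" using ginv_sub[of T S] assms by (meson finite_SigmaI finite_subset)
  have f: "finite (ginv S T)" "finite (prod.swap ` ginv T S)"
    using ginv_sub[of S T] f0 assms by (auto intro: finite_subset)
  have c: "card (prod.swap ` ginv T S) = card (ginv T S)" by (rule card_image) simp
  have "card S * card T = card (ginv S T) + card (ginv T S)"
    using arg_cong[OF e, of card] card_Un_disjoint[OF f d] c by (simp add: card_cartesian_product)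
  hence "(-1::complex) ^ (card S * card T) = gsgn S T * gsgn T S"
    by (simp add: gsgn_ginv power_add)
  moreover have "gsgn S T * gsgn S T = 1" by (simp add: gsgn_ginv power_add[symmetric] flip: power_mult_distrib)
  ultimately show ?thesis by (metis mult.assoc mult.left_neutral)
qed

lemma gsgn_empty[simp]: "gsgn {} T = 1" "gsgn S {} = 1"
  by (simp_all add: gsgn_def)


definition fz :: "grass \<Rightarrow> bool" where "fz a \<longleftrightarrow> (\<forall>U. infinite U \<longrightarrow> a U = 0)"

lemma gmul_inf[simp]: "infinite U \<Longrightarrow> gmul a b U = 0" by (simp add: gmul_def)
lemma gmul_fin: "finite U \<Longrightarrow> gmul a b U = (\<Sum>S\<in>Pow U. gsgn S (U-S) * a S * b (U-S))"
  by (simp add: gmul_def)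
lemma fz_gmul[simp]: "fz (gmul a b)" by (simp add: fz_def)
lemma gcarrier_fz: "a \<in> gcarrier \<Longrightarrow> fz a" by (auto simp: gcarrier_def fz_def)

lemma gmul_gadd_left: "gmul (gadd a a') b = gadd (gmul a b) (gmul a' b)"
  by (rule ext) (simp add: gmul_def gadd_def algebra_simps sum.distrib)
lemma gmul_gadd_right: "gmul b (gadd a a') = gadd (gmul b a) (gmul b a')"
  by (rule ext) (simp add: gmul_def gadd_def algebra_simps sum.distrib)
lemma gmul_gsum_left: "gmul (gsum f A) b = gsum (\<lambda>k. gmul (f k) b) A"
  by (rule ext) (simp add: gmul_def gsum_def sum_distrib_left sum_distrib_right sum.swap[of _ A] algebra_simps)
lemma gmul_gsum_right: "gmul b (gsum f A) = gsum (\<lambda>k. gmul b (f k)) A"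
  by (rule ext) (simp add: gmul_def gsum_def sum_distrib_left sum_distrib_right sum.swap[of _ A] algebra_simps)
lemma gmul_gscale_left: "gmul (gscale c a) b = gscale c (gmul a b)"
  by (rule ext) (simp add: gmul_def gscale_def sum_distrib_left algebra_simps)
lemma gmul_gscale_right: "gmul a (gscale c b) = gscale c (gmul a b)"
  by (rule ext) (simp add: gmul_def gscale_def sum_distrib_left algebra_simps)
lemma gmul_gzero[simp]: "gmul gzero b = gzero" "gmul a gzero = gzero"
  by (rule ext, simp add: gmul_def gzero_def)+

lemma gmul_gone_right: assumes "fz a" shows "gmul a gone = a"
proof (rule ext)
  fix U show "gmul a gone U = a U"
  proof (cases "finite U")
    case True
    have "gmul a gone U = (\<Sum>S\<in>Pow U. if S = U then a U else 0)"
      unfolding gmul_fin[OF True]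
      by (rule sum.cong) (auto simp: gone_def)
    also have "\<dots> = a U" by (simp add: True)
    finally show ?thesis .
  qed (use assms in \<open>simp add: fz_def\<close>)
qed

lemma gmul_gone_left: assumes "fz a" shows "gmul gone a = a"
proof (rule ext)
  fix U show "gmul gone a U = a U"
  proof (cases "finite U")
    case True
    have "gmul gone a U = (\<Sum>S\<in>Pow U. if S = {} then a U else 0)"
      unfolding gmul_fin[OF True]
      by (rule sum.cong) (auto simp: gone_def)
    also have "\<dots> = a U" by (simp add: True)
    finally show ?thesis .
  qed (use assms in \<open>simp add: fz_def\<close>)
qed

lemma sgn3:
  assumes "finite S" "finite R" "finite W" "S \<inter> R = {}" "S \<inter> W = {}" "R \<inter> W = {}"
  shows "gsgn (S \<union> R) W * gsgn S R = gsgn S (R \<union> W) * gsgn R W"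
  using assms by (simp add: gsgn_union_left gsgn_union_right)

lemma gmul_assoc: "gmul (gmul a b) c = gmul a (gmul b c)"
proof (rule ext)
  fix U show "gmul (gmul a b) c U = gmul a (gmul b c) U"
  proof (cases "finite U")
    case True
    have fin: "\<And>T. T \<in> Pow U \<Longrightarrow> finite T" using True by (meson PowD finite_subset)
    have L: "gmul (gmul a b) c U = (\<Sum>T\<in>Pow U. \<Sum>S\<in>Pow T.
        gsgn T (U-T) * gsgn S (T-S) * a S * b (T-S) * c (U-T))"
      unfolding gmul_fin[OF True]
      by (rule sum.cong[OF refl]) (simp add: gmul_fin fin sum_distrib_left sum_distrib_right algebra_simps)
    have R: "gmul a (gmul b c) U = (\<Sum>S\<in>Pow U. \<Sum>R\<in>Pow (U-S).
        gsgn S (U-S) * gsgn R (U-S-R) * a S * b R * c (U-S-R))"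
      unfolding gmul_fin[OF True]
      by (rule sum.cong[OF refl]) (simp add: gmul_fin True sum_distrib_left sum_distrib_right algebra_simps)
    have L2: "(\<Sum>T\<in>Pow U. \<Sum>S\<in>Pow T. gsgn T (U-T) * gsgn S (T-S) * a S * b (T-S) * c (U-T))
       = (\<Sum>(T,S)\<in>Sigma (Pow U) Pow. gsgn T (U-T) * gsgn S (T-S) * a S * b (T-S) * c (U-T))"
      by (rule sum.Sigma) (use True fin in auto)
    have R2: "(\<Sum>S\<in>Pow U. \<Sum>R\<in>Pow (U-S). gsgn S (U-S) * gsgn R (U-S-R) * a S * b R * c (U-S-R))
       = (\<Sum>(S,R)\<in>Sigma (Pow U) (\<lambda>S. Pow (U-S)). gsgn S (U-S) * gsgn R (U-S-R) * a S * b R * c (U-S-R))"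
      by (rule sum.Sigma) (use True in auto)
    have M: "(\<Sum>(T,S)\<in>Sigma (Pow U) Pow. gsgn T (U-T) * gsgn S (T-S) * a S * b (T-S) * c (U-T))
       = (\<Sum>(S,R)\<in>Sigma (Pow U) (\<lambda>S. Pow (U-S)). gsgn S (U-S) * gsgn R (U-S-R) * a S * b R * c (U-S-R))"
    proof -
      have key: "gsgn (S \<union> R) (U - (S \<union> R)) * gsgn S ((S \<union> R) - S) * a S * b ((S \<union> R) - S) * c (U - (S \<union> R))
          = gsgn S (U - S) * gsgn R (U - S - R) * a S * b R * c (U - S - R)"
        if SU: "S \<subseteq> U" "R \<subseteq> U - S" for S R
      proof -
        have fS: "finite S" "finite R" "finite (U - S - R)" using SU True by (meson Diff_subset finite_subset subset_trans finite_Diff)+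
        have e1: "U - (S \<union> R) = U - S - R" "S \<union> R - S = R" using SU by auto
        have e2: "U - S = R \<union> (U - S - R)" using SU by auto
        have "gsgn (S \<union> R) (U - S - R) * gsgn S R = gsgn S (R \<union> (U-S-R)) * gsgn R (U-S-R)"
          by (rule sgn3) (use fS SU in auto)
        thus ?thesis unfolding e1 using e2 by (metis (no_types, lifting) mult.assoc mult.commute)
      qed
      have key2: "gsgn T (U - T) * gsgn S (T - S) * a S * b (T - S) * c (U - T)
          = gsgn S (U - S) * gsgn (T - S) (U - S - (T - S)) * a S * b (T - S) * c (U - S - (T - S))"
        if "S \<subseteq> T" "T \<subseteq> U" for S T
      proof -
        have "S \<union> (T - S) = T" using that by auto
        thus ?thesis using key[of S "T - S"] that by auto
      qed
      show ?thesis
        by (rule sum.reindex_bij_witness[of _ "\<lambda>(S,R). (S \<union> R, S)" "\<lambda>(T,S). (S, T - S)"])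
           (auto simp: key key2)
    qed
    show ?thesis using L R L2 R2 M by simp
  qed simp
qed


lemma card_split: "finite U \<Longrightarrow> S \<subseteq> U \<Longrightarrow> card U = card S + card (U - S)"
  by (metis card_Diff_subset card_mono finite_subset le_add_diff_inverse)

lemma gmul_nz: assumes "gmul a b U \<noteq> 0"
  shows "finite U \<and> (\<exists>S\<subseteq>U. a S \<noteq> 0 \<and> b (U - S) \<noteq> 0)"
proof -
  have f: "finite U" using assms gmul_inf by blast
  from assms have "(\<Sum>S\<in>Pow U. gsgn S (U-S) * a S * b (U-S)) \<noteq> 0" by (simp add: gmul_fin f)
  then obtain S where "S \<in> Pow U" "gsgn S (U-S) * a S * b (U-S) \<noteq> 0" by (meson sum.neutral)
  thus ?thesis using f by auto
qed

lemma galpha_False[simp]: "galpha False a = a" by (simp add: galpha_def)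

lemma galpha_gmul: "galpha p (gmul a b) = gmul (galpha p a) (galpha p b)"
proof (cases p)
  case True
  show ?thesis
  proof (rule ext)
    fix U show "galpha p (gmul a b) U = gmul (galpha p a) (galpha p b) U"
    proof (cases "finite U")
      case fU: True
      have "galpha p (gmul a b) U = (\<Sum>S\<in>Pow U. (-1)^card U * (gsgn S (U-S) * a S * b (U-S)))"
        using True by (simp add: galpha_def gmul_fin fU sum_distrib_left)
      also have "\<dots> = (\<Sum>S\<in>Pow U. gsgn S (U-S) * ((-1)^card S * a S) * ((-1)^card (U-S) * b (U-S)))"
        by (rule sum.cong[OF refl]) (simp add: card_split[OF fU] power_add)
      finally show ?thesis using True by (simp add: galpha_def gmul_fin fU)
    qed (simp add: galpha_def)
  qed
qed simp

lemma galpha_gadd: "galpha p (gadd a b) = gadd (galpha p a) (galpha p b)"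
  by (rule ext) (simp add: galpha_def gadd_def algebra_simps)
lemma galpha_gsum: "galpha p (gsum f A) = gsum (\<lambda>k. galpha p (f k)) A"
  by (rule ext) (simp add: galpha_def gsum_def sum_distrib_left)
lemma galpha_gscale: "galpha p (gscale c a) = gscale c (galpha p a)"
  by (rule ext) (simp add: galpha_def gscale_def)
lemma galpha_gzero[simp]: "galpha p gzero = gzero" by (rule ext) (simp add: galpha_def gzero_def)
lemma galpha_gone[simp]: "galpha p gone = gone" by (rule ext) (simp add: galpha_def gone_def)
lemma galpha_galpha: "galpha p (galpha q a) = galpha (p \<noteq> q) a"
  by (rule ext) (auto simp: galpha_def)
lemma fz_galpha: "fz a \<Longrightarrow> fz (galpha p a)" by (simp add: fz_def galpha_def)

lemma ghomog_galpha: assumes "ghomog q a" shows "galpha p a = (if p \<and> q then gscale (-1) a else a)"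
proof (rule ext)
  fix x show "galpha p a x = (if p \<and> q then gscale (-1) a else a) x"
  proof (cases "a x = 0")
    case False
    hence "odd (card x) = q" using assms by (simp add: ghomog_def)
    thus ?thesis by (cases q) (auto simp: galpha_def gscale_def neg_one_odd_power neg_one_even_power)
  qed (simp add: galpha_def gscale_def)
qed

lemma gcomm:
  assumes "ghomog q y" shows "gmul a y = gmul y (galpha q a)"
proof (rule ext)
  fix U show "gmul a y U = gmul y (galpha q a) U"
  proof (cases "finite U")
    case fU: True
    have "gmul y (galpha q a) U = (\<Sum>T\<in>Pow U. gsgn T (U-T) * y T * galpha q a (U-T))"
      by (simp add: gmul_fin fU)
    also have "\<dots> = (\<Sum>S\<in>Pow U. gsgn (U-S) (U-(U-S)) * y (U-S) * galpha q a (U-(U-S)))"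
      by (rule sum.reindex_bij_witness[of _ "\<lambda>S. U - S" "\<lambda>S. U - S"]) (auto simp: Diff_Diff_Int Int_absorb1 Int_absorb2)
    also have "\<dots> = (\<Sum>S\<in>Pow U. gsgn S (U-S) * a S * y (U-S))"
    proof (rule sum.cong[OF refl])
      fix S assume S: "S \<in> Pow U"
      have e: "U - (U - S) = S" using S by auto
      have fS: "finite S" "finite (U - S)" using S fU by (auto intro: finite_subset)
      show "gsgn (U-S) (U-(U-S)) * y (U-S) * galpha q a (U-(U-S)) = gsgn S (U-S) * a S * y (U-S)"
      proof (cases "y (U - S) = 0")
        case False
        hence par: "odd (card (U - S)) = q" using assms by (simp add: ghomog_def)
        have sw: "gsgn (U - S) S = gsgn S (U - S) * (-1) ^ (card S * card (U - S))"
          by (rule gsgn_swap) (use fS in auto)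
        have pm: "(-1::complex) ^ (card S * card (U - S)) = ((-1)^card (U - S))^card S"
          by (simp add: power_mult[symmetric] mult.commute)
        have "(-1::complex) ^ (card S * card (U - S)) = (if q then (-1)^card S else 1)"
          unfolding pm using par by (cases q) (simp_all add: neg_one_odd_power neg_one_even_power)
        thus ?thesis unfolding e sw by (auto simp: galpha_def)
      qed simp
    qed
    finally show ?thesis by (simp add: gmul_fin fU)
  qed simp
qed

lemma ghomog_gmul: "ghomog p a \<Longrightarrow> ghomog q b \<Longrightarrow> ghomog (p \<noteq> q) (gmul a b)"
  unfolding ghomog_def
proof (intro allI impI)
  fix U assume a: "\<forall>S. a S \<noteq> 0 \<longrightarrow> odd (card S) = p" and b: "\<forall>S. b S \<noteq> 0 \<longrightarrow> odd (card S) = q"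
    and nz: "gmul a b U \<noteq> 0"
  obtain S where S: "finite U" "S \<subseteq> U" "a S \<noteq> 0" "b (U - S) \<noteq> 0" using gmul_nz[OF nz] by blast
  have "card U = card S + card (U - S)" using card_split[OF S(1,2)] .
  moreover have "odd (card S) = p" using a S(3) by blast
  moreover have "odd (card (U - S)) = q" using b S(4) by blast
  ultimately show "odd (card U) = (p \<noteq> q)" by (simp; argo)
qed

lemma ghomog_gadd: assumes "ghomog p a" "ghomog p b" shows "ghomog p (gadd a b)"
  unfolding ghomog_def
proof (intro allI impI)
  fix S assume "gadd a b S \<noteq> 0"
  hence "a S \<noteq> 0 \<or> b S \<noteq> 0" by (auto simp: gadd_def)
  thus "odd (card S) = p" using assms unfolding ghomog_def by blast
qed
lemma ghomog_gsum: "(\<And>k. k \<in> A \<Longrightarrow> ghomog p (f k)) \<Longrightarrow> ghomog p (gsum f A)"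
proof -
  assume h: "\<And>k. k \<in> A \<Longrightarrow> ghomog p (f k)"
  show ?thesis unfolding ghomog_def
  proof (intro allI impI)
    fix S assume "gsum f A S \<noteq> 0"
    then obtain k where "k \<in> A" "f k S \<noteq> 0" unfolding gsum_def by (meson sum.neutral)
    thus "odd (card S) = p" using h[of k] unfolding ghomog_def by blast
  qed
qed
lemma ghomog_gscale: "ghomog p a \<Longrightarrow> ghomog p (gscale c a)"
  unfolding ghomog_def gscale_def by simp
lemma ghomog_gzero[simp]: "ghomog p gzero" by (simp add: ghomog_def gzero_def)
lemma ghomog_gone[simp]: "ghomog False gone" by (simp add: ghomog_def gone_def)
lemma ghomog_galpha': "ghomog p a \<Longrightarrow> ghomog p (galpha q a)"
  unfolding ghomog_def galpha_def by simp

lemma gcarrier_I: "finite {S. a S \<noteq> 0} \<Longrightarrow> (\<And>S. a S \<noteq> 0 \<Longrightarrow> finite S) \<Longrightarrow> a \<in> gcarrier"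
  by (simp add: gcarrier_def)

lemma gcarrier_gzero[simp]: "gzero \<in> gcarrier" by (simp add: gcarrier_def gzero_def)
lemma gcarrier_gone[simp]: "gone \<in> gcarrier" by (simp add: gcarrier_def gone_def)
lemma gcarrier_gadd: assumes "a \<in> gcarrier" "b \<in> gcarrier" shows "gadd a b \<in> gcarrier"
proof (rule gcarrier_I)
  have "{S. gadd a b S \<noteq> 0} \<subseteq> {S. a S \<noteq> 0} \<union> {S. b S \<noteq> 0}" by (auto simp: gadd_def)
  moreover have "finite ({S. a S \<noteq> 0} \<union> {S. b S \<noteq> 0})" using assms by (simp add: gcarrier_def)
  ultimately show "finite {S. gadd a b S \<noteq> 0}" by (rule finite_subset)
  show "finite S" if "gadd a b S \<noteq> 0" for S
  proof -
    have "a S \<noteq> 0 \<or> b S \<noteq> 0" using that by (auto simp: gadd_def)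
    thus ?thesis using assms unfolding gcarrier_def by blast
  qed
qed
lemma gcarrier_mono: "a \<in> gcarrier \<Longrightarrow> (\<And>S. b S \<noteq> 0 \<Longrightarrow> a S \<noteq> 0) \<Longrightarrow> b \<in> gcarrier"
proof (rule gcarrier_I)
  assume a: "a \<in> gcarrier" and h: "\<And>S. b S \<noteq> 0 \<Longrightarrow> a S \<noteq> 0"
  have "{S. b S \<noteq> 0} \<subseteq> {S. a S \<noteq> 0}" using h by auto
  thus "finite {S. b S \<noteq> 0}" using a by (simp add: gcarrier_def finite_subset)
  show "\<And>S. b S \<noteq> 0 \<Longrightarrow> finite S" using a h by (simp add: gcarrier_def)
qed
lemma gcarrier_gscale: "a \<in> gcarrier \<Longrightarrow> gscale c a \<in> gcarrier"
  by (erule gcarrier_mono) (simp add: gscale_def)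
lemma gcarrier_galpha: "a \<in> gcarrier \<Longrightarrow> galpha p a \<in> gcarrier"
  by (erule gcarrier_mono) (simp add: galpha_def split: if_splits)
lemma gcarrier_gsum: "finite A \<Longrightarrow> (\<And>k. k \<in> A \<Longrightarrow> f k \<in> gcarrier) \<Longrightarrow> gsum f A \<in> gcarrier"
proof (induction A rule: finite_induct)
  case empty
  then show ?case by (simp add: gsum_def flip: gzero_def)
next
  case (insert x F)
  have "gsum f (insert x F) = gadd (f x) (gsum f F)"
    using insert by (simp add: gsum_def gadd_def)
  then show ?case using insert by (simp add: gcarrier_gadd)
qed
lemma gcarrier_gmul: assumes "a \<in> gcarrier" "b \<in> gcarrier" shows "gmul a b \<in> gcarrier"
proof (rule gcarrier_I)
  have "{U. gmul a b U \<noteq> 0} \<subseteq> (\<lambda>(S,T). S \<union> T) ` ({S. a S \<noteq> 0} \<times> {S. b S \<noteq> 0})"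
  proof
    fix U assume "U \<in> {U. gmul a b U \<noteq> 0}"
    then obtain S where "S \<subseteq> U" "a S \<noteq> 0" "b (U - S) \<noteq> 0" using gmul_nz by blast
    thus "U \<in> (\<lambda>(S,T). S \<union> T) ` ({S. a S \<noteq> 0} \<times> {S. b S \<noteq> 0})"
      by (intro image_eqI[of _ _ "(S, U - S)"]) auto
  qed
  moreover have "finite ((\<lambda>(S,T). S \<union> T) ` ({S. a S \<noteq> 0} \<times> {S. b S \<noteq> 0}))"
    using assms by (simp add: gcarrier_def)
  ultimately show "finite {U. gmul a b U \<noteq> 0}" by (rule finite_subset)
  show "\<And>U. gmul a b U \<noteq> 0 \<Longrightarrow> finite U" using gmul_nz by blast
qed


lemma gsum_zero[simp]: "gsum (\<lambda>k. gzero) A = gzero" by (simp add: gsum_def gzero_def)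
lemma gsum_swap: "gsum (\<lambda>l. gsum (\<lambda>k. f k l) A) B = gsum (\<lambda>k. gsum (\<lambda>l. f k l) B) A"
  unfolding gsum_def by (rule ext) (simp add: sum.swap[of _ B])
lemma gsum_gadd: "gsum (\<lambda>k. gadd (f k) (g k)) A = gadd (gsum f A) (gsum g A)"
  by (rule ext) (simp add: gsum_def gadd_def sum.distrib)
lemma gsum_gscale: "gsum (\<lambda>k. gscale c (f k)) A = gscale c (gsum f A)"
  by (rule ext) (simp add: gsum_def gscale_def sum_distrib_left)
lemma gsum_cong: "(\<And>k. k \<in> A \<Longrightarrow> f k = g k) \<Longrightarrow> gsum f A = gsum g A"
  unfolding gsum_def by (rule ext) (rule sum.cong, auto)
lemma gsum_single: assumes "finite A" "i \<in> A" "\<And>k. k \<in> A \<Longrightarrow> k \<noteq> i \<Longrightarrow> f k = gzero"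
  shows "gsum f A = f i"
proof (rule ext)
  fix S
  have "gsum f A S = f i S + (\<Sum>k\<in>A - {i}. f k S)"
    unfolding gsum_def using assms(1,2) by (simp add: sum.remove)
  also have "(\<Sum>k\<in>A - {i}. f k S) = 0" using assms(3) by (simp add: gzero_def)
  finally show "gsum f A S = f i S" by simp
qed
lemma gsum_allzero: "(\<And>k. k \<in> A \<Longrightarrow> f k = gzero) \<Longrightarrow> gsum f A = gzero"
  using gsum_cong[of A f "\<lambda>k. gzero"] by simp
lemma gadd_gzero[simp]: "gadd a gzero = a" "gadd gzero a = a" by (simp_all add: gadd_def gzero_def)
lemma gscale_gzero[simp]: "gscale c gzero = gzero" by (simp add: gscale_def gzero_def)
lemma gscale_zero[simp]: "gscale 0 a = gzero" by (simp add: gscale_def gzero_def)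
lemma gscale_one[simp]: "gscale 1 a = a" by (simp add: gscale_def)
lemma gscale_gscale: "gscale c (gscale d a) = gscale (c*d) a" by (simp add: gscale_def mult.assoc)
lemma fz_gzero[simp]: "fz gzero" by (simp add: fz_def gzero_def)
lemma fz_gone[simp]: "fz gone" by (simp add: fz_def gone_def)

lemma smat_ij: assumes "X \<in> smat m n" shows "if i < m+2*n \<and> j < m+2*n then X i j \<in> gcarrier else X i j = gzero"
  using assms unfolding smat_def by blast
lemma smat_carrier: assumes "X \<in> smat m n" shows "X i j \<in> gcarrier"
  using smat_ij[OF assms, of i j] by (cases "i < m+2*n \<and> j < m+2*n") simp_all
lemma smat_fz: "X \<in> smat m n \<Longrightarrow> fz (X i j)" using smat_carrier gcarrier_fz by blast
lemma smat_out: "X \<in> smat m n \<Longrightarrow> \<not> (i < m+2*n \<and> j < m+2*n) \<Longrightarrow> X i j = gzero"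
  using smat_ij[of X m n i j] by simp
lemma smatI: "(\<And>i j. X i j \<in> gcarrier) \<Longrightarrow> (\<And>i j. \<not> (i < m+2*n \<and> j < m+2*n) \<Longrightarrow> X i j = gzero) \<Longrightarrow> X \<in> smat m n"
  unfolding smat_def by auto
lemma Emat_smat: "X \<in> Emat m n \<Longrightarrow> X \<in> smat m n" by (simp add: Emat_def)
lemma Emat_homog: "X \<in> Emat m n \<Longrightarrow> ghomog (spar m i \<noteq> spar m j) (X i j)"
  unfolding Emat_def by (cases "i < m+2*n \<and> j < m+2*n") (auto simp: smat_out)
lemma EmatI: "X \<in> smat m n \<Longrightarrow> (\<And>i j. ghomog (spar m i \<noteq> spar m j) (X i j)) \<Longrightarrow> X \<in> Emat m n"
  unfolding Emat_def by auto

lemma matmul_smat: assumes "X \<in> smat m n" "Y \<in> smat m n" shows "matmul m n X Y \<in> smat m n"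
proof (rule smatI)
  show "matmul m n X Y i j \<in> gcarrier" for i j
    unfolding matmul_def by (rule gcarrier_gsum) (simp_all add: gcarrier_gmul smat_carrier[OF assms(1)] smat_carrier[OF assms(2)])
  show "matmul m n X Y i j = gzero" if "\<not> (i < m+2*n \<and> j < m+2*n)" for i j
    unfolding matmul_def by (rule gsum_allzero) (use that in \<open>auto simp: smat_out[OF assms(1)] smat_out[OF assms(2)]\<close>)
qed

lemma matmul_Emat: assumes "X \<in> Emat m n" "Y \<in> Emat m n" shows "matmul m n X Y \<in> Emat m n"
proof (rule EmatI)
  show "matmul m n X Y \<in> smat m n" using assms by (simp add: Emat_smat matmul_smat)
  show "ghomog (spar m i \<noteq> spar m j) (matmul m n X Y i j)" for i j
    unfolding matmul_def
  proof (rule ghomog_gsum)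
    fix k
    have "ghomog ((spar m i \<noteq> spar m k) \<noteq> (spar m k \<noteq> spar m j)) (gmul (X i k) (Y k j))"
      by (rule ghomog_gmul) (use assms Emat_homog in auto)
    moreover have "((spar m i \<noteq> spar m k) \<noteq> (spar m k \<noteq> spar m j)) = (spar m i \<noteq> spar m j)" by auto
    ultimately show "ghomog (spar m i \<noteq> spar m j) (gmul (X i k) (Y k j))" by simp
  qed
qed

lemma matmul_assoc: "matmul m n (matmul m n X Y) Z = matmul m n X (matmul m n Y Z)"
  unfolding matmul_def
proof (rule ext, rule ext)
  fix i j
  have "gsum (\<lambda>l. gmul (gsum (\<lambda>k. gmul (X i k) (Y k l)) {..<m + 2 * n}) (Z l j)) {..<m + 2 * n}
    = gsum (\<lambda>l. gsum (\<lambda>k. gmul (X i k) (gmul (Y k l) (Z l j))) {..<m + 2 * n}) {..<m + 2 * n}"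
    by (simp only: gmul_gsum_left gmul_assoc)
  also have "\<dots> = gsum (\<lambda>k. gsum (\<lambda>l. gmul (X i k) (gmul (Y k l) (Z l j))) {..<m + 2 * n}) {..<m + 2 * n}"
    by (rule gsum_swap)
  also have "\<dots> = gsum (\<lambda>k. gmul (X i k) (gsum (\<lambda>l. gmul (Y k l) (Z l j)) {..<m + 2 * n})) {..<m + 2 * n}"
    by (simp only: gmul_gsum_right)
  finally show "gsum (\<lambda>l. gmul (gsum (\<lambda>k. gmul (X i k) (Y k l)) {..<m + 2 * n}) (Z l j)) {..<m + 2 * n} =
         gsum (\<lambda>k. gmul (X i k) (gsum (\<lambda>l. gmul (Y k l) (Z l j)) {..<m + 2 * n})) {..<m + 2 * n}" .
qed

lemma matvec_matmul: "matvec m n (matmul m n X Y) v = matvec m n X (matvec m n Y v)"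
  unfolding matmul_def matvec_def
proof (rule ext)
  fix i
  have "gsum (\<lambda>l. gmul (gsum (\<lambda>k. gmul (X i k) (Y k l)) {..<m + 2 * n}) (v l)) {..<m + 2 * n}
    = gsum (\<lambda>l. gsum (\<lambda>k. gmul (X i k) (gmul (Y k l) (v l))) {..<m + 2 * n}) {..<m + 2 * n}"
    by (simp only: gmul_gsum_left gmul_assoc)
  also have "\<dots> = gsum (\<lambda>k. gsum (\<lambda>l. gmul (X i k) (gmul (Y k l) (v l))) {..<m + 2 * n}) {..<m + 2 * n}"
    by (rule gsum_swap)
  also have "\<dots> = gsum (\<lambda>k. gmul (X i k) (gsum (\<lambda>l. gmul (Y k l) (v l)) {..<m + 2 * n})) {..<m + 2 * n}"
    by (simp only: gmul_gsum_right)
  finally show "gsum (\<lambda>l. gmul (gsum (\<lambda>k. gmul (X i k) (Y k l)) {..<m + 2 * n}) (v l)) {..<m + 2 * n} =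
         gsum (\<lambda>k. gmul (X i k) (gsum (\<lambda>l. gmul (Y k l) (v l)) {..<m + 2 * n})) {..<m + 2 * n}" .
qed

lemma midm_Emat: "midm m n \<in> Emat m n"
  by (rule EmatI, rule smatI) (auto simp: midm_def)

lemma matmul_midm_left: assumes "X \<in> smat m n" shows "matmul m n (midm m n) X = X"
proof (rule ext, rule ext)
  fix i j show "matmul m n (midm m n) X i j = X i j"
  proof (cases "i < m+2*n")
    case True
    have "matmul m n (midm m n) X i j = gmul (midm m n i i) (X i j)"
      unfolding matmul_def by (rule gsum_single) (use True in \<open>auto simp: midm_def\<close>)
    thus ?thesis using True by (simp add: midm_def gmul_gone_left[OF smat_fz[OF assms]])
  next
    case False
    have "X i j = gzero" using False by (simp add: smat_out[OF assms])
    moreover have "matmul m n (midm m n) X i j = gzero" unfolding matmul_def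
      by (rule gsum_allzero) (use False in \<open>simp add: midm_def\<close>)
    ultimately show ?thesis by simp
  qed
qed

lemma matmul_midm_right: assumes "X \<in> smat m n" shows "matmul m n X (midm m n) = X"
proof (rule ext, rule ext)
  fix i j show "matmul m n X (midm m n) i j = X i j"
  proof (cases "j < m+2*n")
    case True
    have "matmul m n X (midm m n) i j = gmul (X i j) (midm m n j j)"
      unfolding matmul_def by (rule gsum_single) (use True in \<open>auto simp: midm_def\<close>)
    thus ?thesis using True by (simp add: midm_def gmul_gone_right[OF smat_fz[OF assms]])
  next
    case False
    have "X i j = gzero" using False by (simp add: smat_out[OF assms])
    moreover have "matmul m n X (midm m n) i j = gzero" unfolding matmul_def
      by (rule gsum_allzero) (use False in \<open>simp add: midm_def\<close>)
    ultimately show ?thesis by simp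
  qed
qed

lemma matvec_basis: assumes "X \<in> smat m n" "j < m+2*n" shows "matvec m n X (basisvec j) = (\<lambda>k. X k j)"
proof (rule ext)
  fix k
  have "matvec m n X (basisvec j) k = gmul (X k j) (basisvec j j)"
    unfolding matvec_def by (rule gsum_single) (use assms in \<open>auto simp: basisvec_def\<close>)
  thus "matvec m n X (basisvec j) k = X k j" by (simp add: basisvec_def gmul_gone_right[OF smat_fz[OF assms(1)]])
qed

lemma inv_unique:
  assumes "g \<in> smat m n" "h \<in> smat m n" "h' \<in> smat m n"
    "matmul m n g h = midm m n" "matmul m n h' g = midm m n"
  shows "h = h'"
proof -
  have "h' = matmul m n h' (matmul m n g h)" using assms by (simp add: matmul_midm_right)
  also have "\<dots> = matmul m n (matmul m n h' g) h" by (simp add: matmul_assoc)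
  also have "\<dots> = h" using assms by (simp add: matmul_midm_left)
  finally show ?thesis by simp
qed

lemma minv_eq:
  assumes "g \<in> Emat m n" "h \<in> Emat m n" "matmul m n g h = midm m n" "matmul m n h g = midm m n"
  shows "minv m n g = h"
  unfolding minv_def
proof (rule the_equality)
  show "h \<in> Emat m n \<and> matmul m n g h = midm m n \<and> matmul m n h g = midm m n" using assms by simp
  fix h' assume "h' \<in> Emat m n \<and> matmul m n g h' = midm m n \<and> matmul m n h' g = midm m n"
  thus "h' = h" using inv_unique[of g m n h' h] assms by (auto simp: Emat_smat)
qed

lemma minv_props: assumes "g \<in> GLs m n"
  shows "minv m n g \<in> Emat m n" "matmul m n g (minv m n g) = midm m n" "matmul m n (minv m n g) g = midm m n"
proof -
  obtain h where h: "h \<in> Emat m n" "matmul m n g h = midm m n" "matmul m n h g = midm m n" "g \<in> Emat m n"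
    using assms unfolding GLs_def by auto
  have "minv m n g = h" by (rule minv_eq) (use h in auto)
  thus "minv m n g \<in> Emat m n" "matmul m n g (minv m n g) = midm m n" "matmul m n (minv m n g) g = midm m n"
    using h by auto
qed

lemma GLs_Emat: "g \<in> GLs m n \<Longrightarrow> g \<in> Emat m n" by (simp add: GLs_def)

lemma minv_GLs: assumes "g \<in> GLs m n" shows "minv m n g \<in> GLs m n" "minv m n (minv m n g) = g"
proof -
  note p = minv_props[OF assms]
  show "minv m n g \<in> GLs m n" unfolding GLs_def using p GLs_Emat[OF assms] by auto
  show "minv m n (minv m n g) = g" by (rule minv_eq) (use p GLs_Emat[OF assms] in auto)
qed


lemma gsum_reindex: "inj_on h A \<Longrightarrow> gsum f (h ` A) = gsum (\<lambda>x. f (h x)) A"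
  unfolding gsum_def by (rule ext) (simp add: sum.reindex)
lemma gsum_prod: "gsum f (A \<times> B) = gsum (\<lambda>a. gsum (\<lambda>b. f (a, b)) B) A"
  unfolding gsum_def by (rule ext) (simp add: sum.cartesian_product)

lemma gsum_singleton[simp]: "gsum f {x} = f x" by (simp add: gsum_def)

lemma finite_tuples: "finite (tuples m n r)"
proof -
  have "tuples m n r = {xs. set xs \<subseteq> {..<m+2*n} \<and> length xs = r}" by (auto simp: tuples_def)
  thus ?thesis by (simp add: finite_lists_length_eq)
qed

lemma tuples_0: "tuples m n 0 = {[]}" by (auto simp: tuples_def)
lemma tuples_Suc: "tuples m n (Suc r) = (\<lambda>(k, K). k # K) ` ({..<m+2*n} \<times> tuples m n r)"
proof (rule Set.set_eqI)
  fix J show "J \<in> tuples m n (Suc r) \<longleftrightarrow> J \<in> (\<lambda>(k, K). k # K) ` ({..<m+2*n} \<times> tuples m n r)"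
    by (cases J) (auto simp: tuples_def image_iff)
qed
lemma gsum_tuples_Suc:
  "gsum f (tuples m n (Suc r)) = gsum (\<lambda>k. gsum (\<lambda>K. f (k # K)) (tuples m n r)) {..<m+2*n}"
proof -
  have "inj_on (\<lambda>(k, K). k # K) ({..<m+2*n} \<times> tuples m n r)" by (auto simp: inj_on_def)
  thus ?thesis unfolding tuples_Suc by (simp add: gsum_reindex gsum_prod)
qed
lemma tuples_Cons: "k # K \<in> tuples m n (Suc r) \<longleftrightarrow> k < m+2*n \<and> K \<in> tuples m n r"
  by (auto simp: tuples_def)

lemma tpar_Cons: "tpar m (j # J) = (spar m j \<noteq> tpar m J)" by (simp add: tpar_def)

lemma tcoef_len: "length J \<noteq> length ws \<Longrightarrow> tcoef m J ws = gzero"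
proof (induction J arbitrary: ws)
  case Nil then show ?case by (cases ws) auto
next
  case (Cons j J) then show ?case by (cases ws) auto
qed

lemma basisvec_app: "basisvec k j = (if j = k then gone else gzero)" by (simp add: basisvec_def)

lemma tcoef_basis: "length J = length K \<Longrightarrow> tcoef m J (map basisvec K) = (if J = K then gone else gzero)"
proof (induction J arbitrary: K)
  case Nil then show ?case by simp
next
  case (Cons j J)
  then obtain k K' where K: "K = k # K'" "length J = length K'" by (cases K) auto
  show ?case using Cons.IH[OF K(2)] unfolding K(1)
    by (simp add: basisvec_app gmul_gone_left)
qed

lemma TVdual_carrier: "c \<in> TVdual m n r \<Longrightarrow> c J \<in> gcarrier"
proof -
  assume "c \<in> TVdual m n r"
  hence "if J \<in> tuples m n r then c J \<in> gcarrier else c J = gzero" unfolding TVdual_def by blast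
  thus ?thesis by (cases "J \<in> tuples m n r") simp_all
qed
lemma TVdual_out: "c \<in> TVdual m n r \<Longrightarrow> J \<notin> tuples m n r \<Longrightarrow> c J = gzero"
proof -
  assume "c \<in> TVdual m n r" "J \<notin> tuples m n r"
  thus ?thesis unfolding TVdual_def by (metis (mono_tags, lifting) mem_Collect_eq)
qed

lemma Leval_basis: assumes "c \<in> TVdual m n r" "K \<in> tuples m n r"
  shows "Leval m n r c (map basisvec K) = c K"
proof -
  have "Leval m n r c (map basisvec K) = gmul (c K) (tcoef m K (map basisvec K))"
    unfolding Leval_def
  proof (rule gsum_single)
    fix J assume "J \<in> tuples m n r" "J \<noteq> K"
    thus "gmul (c J) (tcoef m J (map basisvec K)) = gzero"
      using assms(2) by (simp add: tcoef_basis tuples_def)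
  qed (use assms finite_tuples in auto)
  thus ?thesis by (simp add: tcoef_basis gmul_gone_right gcarrier_fz TVdual_carrier[OF assms(1)])
qed

lemma tcoef_homog: assumes "Y \<in> Emat m n"
  shows "ghomog (tpar m J \<noteq> tpar m K) (tcoef m J (map (\<lambda>k i. Y i k) K))"
proof (induction J arbitrary: K)
  case Nil then show ?case by (cases K) (auto simp: tpar_def)
next
  case (Cons j J)
  show ?case
  proof (cases K)
    case (Cons k K')
    have h: "ghomog ((spar m j \<noteq> spar m k) \<noteq> (tpar m J \<noteq> tpar m K'))
        (gmul (galpha (tpar m J) (Y j k)) (tcoef m J (map (\<lambda>k i. Y i k) K')))"
      by (rule ghomog_gmul[OF ghomog_galpha'[OF Emat_homog[OF assms]] Cons.IH])
    have e: "((spar m j \<noteq> spar m k) \<noteq> (tpar m J \<noteq> tpar m K')) = (tpar m (j # J) \<noteq> tpar m (k # K'))"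
      by (simp add: tpar_Cons) argo
    show ?thesis using h unfolding Cons e by simp
  qed simp
qed

lemma tcoef_ML: assumes Y: "Y \<in> Emat m n"
  shows "length ws = r \<Longrightarrow> J \<in> tuples m n r \<Longrightarrow> tcoef m J (map (matvec m n Y) ws) =
     gsum (\<lambda>K. gmul (tcoef m J (map (\<lambda>k i. Y i k) K)) (tcoef m K ws)) (tuples m n r)"
proof (induction ws arbitrary: J r)
  case Nil
  hence "r = 0" "J = []" by (auto simp: tuples_def)
  then show ?case by (simp add: tuples_0 gmul_gone_left)
next
  case (Cons w ws)
  obtain r' where r: "r = Suc r'" "length ws = r'" using Cons.prems by auto
  obtain j J' where J: "J = j # J'" "j < m+2*n" "J' \<in> tuples m n r'"
    using Cons.prems r by (cases J) (auto simp: tuples_def)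
  define pJ where "pJ = tpar m J'"
  define T where "T K = tcoef m J' (map (\<lambda>k i. Y i k) K)" for K
  define C where "C K = tcoef m K ws" for K
  have IH: "tcoef m J' (map (matvec m n Y) ws) = gsum (\<lambda>K. gmul (T K) (C K)) (tuples m n r')"
    using Cons.IH[OF r(2) J(3)] by (simp add: T_def C_def)
  have lhs: "tcoef m J (map (matvec m n Y) (w # ws)) =
      gsum (\<lambda>k. gsum (\<lambda>K. gmul (gmul (galpha pJ (Y j k)) (galpha pJ (w k))) (gmul (T K) (C K)))
         (tuples m n r')) {..<m+2*n}"
    unfolding J(1) by (simp add: IH pJ_def matvec_def galpha_gsum galpha_gmul gmul_gsum_left gmul_gsum_right) (rule gsum_swap)
  have rhs: "gsum (\<lambda>K. gmul (tcoef m J (map (\<lambda>k i. Y i k) K)) (tcoef m K (w # ws))) (tuples m n r) =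
      gsum (\<lambda>k. gsum (\<lambda>K. gmul (gmul (galpha pJ (Y j k)) (T K)) (gmul (galpha (tpar m K) (w k)) (C K)))
         (tuples m n r')) {..<m+2*n}"
    unfolding r(1) gsum_tuples_Suc J(1) by (simp add: T_def C_def pJ_def)
  have trm: "gmul (gmul (galpha pJ (Y j k)) (galpha pJ (w k))) (gmul (T K) (C K)) =
      gmul (gmul (galpha pJ (Y j k)) (T K)) (gmul (galpha (tpar m K) (w k)) (C K))" for k K
  proof -
    have hT: "ghomog (pJ \<noteq> tpar m K) (T K)" unfolding T_def pJ_def by (rule tcoef_homog[OF Y])
    have "gmul (galpha pJ (w k)) (T K) = gmul (T K) (galpha (pJ \<noteq> tpar m K) (galpha pJ (w k)))"
      by (rule gcomm[OF hT])
    also have "galpha (pJ \<noteq> tpar m K) (galpha pJ (w k)) = galpha (tpar m K) (w k)"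
    proof -
      have "((pJ \<noteq> tpar m K) \<noteq> pJ) = tpar m K" by argo
      thus ?thesis by (simp only: galpha_galpha)
    qed
    finally have sw: "gmul (galpha pJ (w k)) (T K) = gmul (T K) (galpha (tpar m K) (w k))" .
    have "gmul (gmul (galpha pJ (Y j k)) (galpha pJ (w k))) (gmul (T K) (C K)) =
        gmul (galpha pJ (Y j k)) (gmul (gmul (galpha pJ (w k)) (T K)) (C K))"
      by (simp add: gmul_assoc)
    also have "\<dots> = gmul (galpha pJ (Y j k)) (gmul (gmul (T K) (galpha (tpar m K) (w k))) (C K))"
      by (simp only: sw)
    also have "\<dots> = gmul (gmul (galpha pJ (Y j k)) (T K)) (gmul (galpha (tpar m K) (w k)) (C K))"
      by (simp add: gmul_assoc)
    finally show ?thesis .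
  qed
  show ?case using lhs rhs trm by simp
qed

lemma Leval_ML: assumes Y: "Y \<in> Emat m n" and len: "length ws = r"
  shows "Leval m n r c (map (matvec m n Y) ws) =
     gsum (\<lambda>K. gmul (Leval m n r c (map (\<lambda>k i. Y i k) K)) (tcoef m K ws)) (tuples m n r)"
proof -
  have "Leval m n r c (map (matvec m n Y) ws) =
    gsum (\<lambda>J. gsum (\<lambda>K. gmul (gmul (c J) (tcoef m J (map (\<lambda>k i. Y i k) K))) (tcoef m K ws)) (tuples m n r)) (tuples m n r)"
    unfolding Leval_def
    by (rule gsum_cong) (simp add: tcoef_ML[OF Y len] gmul_gsum_right gmul_assoc)
  also have "\<dots> = gsum (\<lambda>K. gsum (\<lambda>J. gmul (gmul (c J) (tcoef m J (map (\<lambda>k i. Y i k) K))) (tcoef m K ws)) (tuples m n r)) (tuples m n r)"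
    by (rule gsum_swap)
  also have "\<dots> = gsum (\<lambda>K. gmul (Leval m n r c (map (\<lambda>k i. Y i k) K)) (tcoef m K ws)) (tuples m n r)"
    unfolding Leval_def by (simp add: gmul_gsum_left)
  finally show ?thesis .
qed

lemma cols_eq: assumes "X \<in> smat m n" "K \<in> tuples m n r"
  shows "map (\<lambda>j. matvec m n X (basisvec j)) K = map (\<lambda>k i. X i k) K"
  using assms by (auto simp: tuples_def matvec_basis)


definition cmul :: "nat \<Rightarrow> (nat \<Rightarrow> nat \<Rightarrow> complex) \<Rightarrow> (nat \<Rightarrow> nat \<Rightarrow> complex) \<Rightarrow> (nat \<Rightarrow> nat \<Rightarrow> complex)" where
  "cmul N A B = (\<lambda>i j. \<Sum>k<N. A i k * B k j)"
definition cid :: "nat \<Rightarrow> nat \<Rightarrow> nat \<Rightarrow> complex" where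
  "cid N = (\<lambda>i j. if i < N \<and> i = j then 1 else 0)"
definition toJ :: "nat \<Rightarrow> (nat \<Rightarrow> nat \<Rightarrow> complex) \<Rightarrow> complex mat" where
  "toJ N A = mat N N (\<lambda>(i, j). A i j)"

lemma toJ_carrier: "toJ N A \<in> carrier_mat N N" by (simp add: toJ_def)

lemma toJ_mult: "i < N \<Longrightarrow> j < N \<Longrightarrow> (toJ N A * B) $$ (i, j) = (\<Sum>k<N. A i k * B $$ (k, j))"
  if "B \<in> carrier_mat N N" for B
  using that by (simp add: toJ_def scalar_prod_def atLeast0LessThan row_def col_def)

lemma toJ_mult': "i < N \<Longrightarrow> j < N \<Longrightarrow> (B * toJ N A) $$ (i, j) = (\<Sum>k<N. B $$ (i, k) * A k j)"
  if "B \<in> carrier_mat N N" for B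
  using that by (simp add: toJ_def scalar_prod_def atLeast0LessThan row_def col_def)

lemma cinv_cofinite:
  fixes C :: "nat \<Rightarrow> nat \<Rightarrow> complex"
  assumes C0: "\<And>i j. \<not> (i < N \<and> j < N) \<Longrightarrow> C i j = 0"
  shows "\<exists>Z. finite Z \<and> (\<forall>t. t \<notin> Z \<longrightarrow> (\<exists>D. (\<forall>i j. \<not> (i < N \<and> j < N) \<longrightarrow> D i j = 0) \<and>
     cmul N (\<lambda>i j. C i j + (if i < N \<and> i = j then t else 0)) D = cid N \<and>
     cmul N D (\<lambda>i j. C i j + (if i < N \<and> i = j then t else 0)) = cid N))"
proof -
  define A where "A = toJ N (\<lambda>i j. - C i j)"
  have A: "A \<in> carrier_mat N N" by (simp add: A_def toJ_carrier)
  define Z where "Z = {t. poly (char_poly A) t = 0}"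
  have "char_poly A \<noteq> 0" using degree_monic_char_poly[OF A] by auto
  hence fZ: "finite Z" unfolding Z_def by (rule poly_roots_finite)
  have good: "\<exists>D. (\<forall>i j. \<not> (i < N \<and> j < N) \<longrightarrow> D i j = 0) \<and>
     cmul N (\<lambda>i j. C i j + (if i < N \<and> i = j then t else 0)) D = cid N \<and>
     cmul N D (\<lambda>i j. C i j + (if i < N \<and> i = j then t else 0)) = cid N" if t: "t \<notin> Z" for t
  proof -
    define Ct where "Ct = (\<lambda>i j. C i j + (if i < N \<and> i = j then t else 0))"
    define M where "M = toJ N Ct"
    have M: "M \<in> carrier_mat N N" by (simp add: M_def toJ_carrier)
    have "M = - char_matrix A t"
      by (rule eq_matI) (use A in \<open>auto simp: M_def A_def Ct_def toJ_def char_matrix_def\<close>)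
    hence dM: "det M \<noteq> 0" using t char_poly_matrix[OF A, of t] by (simp add: Z_def)
    define W where "W = (1 / det M) \<cdot>\<^sub>m adj_mat M"
    have W: "W \<in> carrier_mat N N" using adj_mat(1)[OF M] by (simp add: W_def)
    have one: "(1 / det M) \<cdot>\<^sub>m (det M \<cdot>\<^sub>m 1\<^sub>m N) = 1\<^sub>m N"
      using dM by (intro eq_matI) auto
    have MW: "M * W = 1\<^sub>m N" unfolding W_def
      using adj_mat(2)[OF M] one by (simp add: mult_smult_distrib[OF M adj_mat(1)[OF M]])
    have WM: "W * M = 1\<^sub>m N" unfolding W_def
      using adj_mat(3)[OF M] one by (simp add: mult_smult_assoc_mat[OF adj_mat(1)[OF M] M])
    define D where "D = (\<lambda>i j. if i < N \<and> j < N then W $$ (i, j) else 0)"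
    have "cmul N Ct D = cid N"
    proof (rule ext, rule ext)
      fix i j show "cmul N Ct D i j = cid N i j"
      proof (cases "i < N \<and> j < N")
        case True
        have "cmul N Ct D i j = (M * W) $$ (i, j)"
          using True unfolding M_def by (simp add: toJ_mult[OF W] cmul_def D_def)
        thus ?thesis using True MW by (simp add: cid_def)
      next
        case False
        thus ?thesis by (auto simp: cmul_def D_def Ct_def cid_def C0)
      qed
    qed
    moreover have "cmul N D Ct = cid N"
    proof (rule ext, rule ext)
      fix i j show "cmul N D Ct i j = cid N i j"
      proof (cases "i < N \<and> j < N")
        case True
        have "cmul N D Ct i j = (W * M) $$ (i, j)"
          using True unfolding M_def by (simp add: toJ_mult'[OF W] cmul_def D_def)
        thus ?thesis using True WM by (simp add: cid_def)
      next
        case False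
        thus ?thesis by (auto simp: cmul_def D_def Ct_def cid_def C0)
      qed
    qed
    ultimately show ?thesis unfolding Ct_def by (intro exI[of _ D]) (auto simp: D_def)
  qed
  show ?thesis using fZ good by blast
qed


definition Emb :: "(nat \<Rightarrow> nat \<Rightarrow> complex) \<Rightarrow> Defs.mat" where "Emb C = (\<lambda>i j. gscale (C i j) gone)"
definition madd :: "Defs.mat \<Rightarrow> Defs.mat \<Rightarrow> Defs.mat" where "madd A B = (\<lambda>i j. gadd (A i j) (B i j))"
definition mscale :: "complex \<Rightarrow> Defs.mat \<Rightarrow> Defs.mat" where "mscale c A = (\<lambda>i j. gscale c (A i j))"
definition mzero :: Defs.mat where "mzero = (\<lambda>i j. gzero)"
definition msum :: "(nat \<Rightarrow> Defs.mat) \<Rightarrow> nat set \<Rightarrow> Defs.mat" where "msum f A = (\<lambda>i j. gsum (\<lambda>k. f k i j) A)"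
primrec mpow :: "nat \<Rightarrow> nat \<Rightarrow> Defs.mat \<Rightarrow> nat \<Rightarrow> Defs.mat" where
  "mpow m n Q 0 = midm m n"
| "mpow m n Q (Suc k) = matmul m n Q (mpow m n Q k)"

lemma gsum_gscale_gone: "gsum (\<lambda>k. gscale (f k) gone) A = gscale (\<Sum>k\<in>A. f k) gone"
  by (rule ext) (simp add: gsum_def gscale_def sum_distrib_right)

lemma gmul_gscale_gone: "gmul (gscale a gone) (gscale b gone) = gscale (a * b) gone"
  by (simp add: gmul_gscale_left gmul_gscale_right gmul_gone_left gscale_gscale mult.commute)

lemma Emb_mult: "matmul m n (Emb A) (Emb B) = Emb (cmul (m+2*n) A B)"
  unfolding matmul_def Emb_def cmul_def by (simp add: gmul_gscale_gone gsum_gscale_gone)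

lemma Emb_cid: "Emb (cid (m+2*n)) = midm m n"
  unfolding Emb_def cid_def midm_def by (rule ext, rule ext) simp

lemma Emb_Emat: assumes "\<And>i j. \<not> (i < m+2*n \<and> j < m+2*n) \<Longrightarrow> C i j = 0"
  and "\<And>i j. spar m i \<noteq> spar m j \<Longrightarrow> C i j = 0"
  shows "Emb C \<in> Emat m n"
proof (rule EmatI)
  show "Emb C \<in> smat m n" by (rule smatI) (simp_all add: Emb_def gcarrier_gscale assms(1))
  show "ghomog (spar m i \<noteq> spar m j) (Emb C i j)" for i j
    by (cases "spar m i \<noteq> spar m j") (simp_all add: Emb_def assms(2) ghomog_gscale)
qed

lemma madd_Emat: assumes a: "A \<in> Emat m n" and b: "B \<in> Emat m n" shows "madd A B \<in> Emat m n"
proof (rule EmatI)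
  show "madd A B \<in> smat m n"
  proof (rule smatI)
    show "madd A B i j \<in> gcarrier" for i j unfolding madd_def
      by (rule gcarrier_gadd[OF smat_carrier[OF Emat_smat[OF a]] smat_carrier[OF Emat_smat[OF b]]])
    show "madd A B i j = gzero" if "\<not> (i < m+2*n \<and> j < m+2*n)" for i j
      unfolding madd_def using smat_out[OF Emat_smat[OF a] that] smat_out[OF Emat_smat[OF b] that] by simp
  qed
  show "ghomog (spar m i \<noteq> spar m j) (madd A B i j)" for i j
    unfolding madd_def by (rule ghomog_gadd[OF Emat_homog[OF a] Emat_homog[OF b]])
qed
lemma mscale_Emat: assumes a: "A \<in> Emat m n" shows "mscale c A \<in> Emat m n"
proof (rule EmatI)
  show "mscale c A \<in> smat m n"
  proof (rule smatI)
    show "mscale c A i j \<in> gcarrier" for i j unfolding mscale_def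
      by (rule gcarrier_gscale[OF smat_carrier[OF Emat_smat[OF a]]])
    show "mscale c A i j = gzero" if "\<not> (i < m+2*n \<and> j < m+2*n)" for i j
      unfolding mscale_def using smat_out[OF Emat_smat[OF a] that] by simp
  qed
  show "ghomog (spar m i \<noteq> spar m j) (mscale c A i j)" for i j
    unfolding mscale_def by (rule ghomog_gscale[OF Emat_homog[OF a]])
qed
lemma mzero_Emat: "mzero \<in> Emat m n"
  by (intro EmatI smatI) (auto simp: mzero_def)
lemma msum_Emat: "finite A \<Longrightarrow> (\<And>k. k \<in> A \<Longrightarrow> f k \<in> Emat m n) \<Longrightarrow> msum f A \<in> Emat m n"
proof (induction A rule: finite_induct)
  case empty then show ?case using mzero_Emat by (simp add: msum_def mzero_def gsum_def gzero_def)
next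
  case (insert x F)
  have "msum f (insert x F) = madd (f x) (msum f F)"
    using insert(1,2) by (simp add: msum_def madd_def gsum_def gadd_def)
  then show ?case using insert by (simp add: madd_Emat)
qed
lemma mpow_Emat: "Q \<in> Emat m n \<Longrightarrow> mpow m n Q k \<in> Emat m n"
  by (induction k) (simp_all add: midm_Emat matmul_Emat)

lemma matmul_madd_left: "matmul m n (madd A B) C = madd (matmul m n A C) (matmul m n B C)"
  unfolding matmul_def madd_def by (simp add: gmul_gadd_left gsum_gadd)
lemma matmul_madd_right: "matmul m n C (madd A B) = madd (matmul m n C A) (matmul m n C B)"
  unfolding matmul_def madd_def by (simp add: gmul_gadd_right gsum_gadd)
lemma matmul_mscale_left: "matmul m n (mscale c A) B = mscale c (matmul m n A B)"
  unfolding matmul_def mscale_def by (simp add: gmul_gscale_left gsum_gscale)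
lemma matmul_mscale_right: "matmul m n B (mscale c A) = mscale c (matmul m n B A)"
  unfolding matmul_def mscale_def by (simp add: gmul_gscale_right gsum_gscale)
lemma matmul_mzero_left: "matmul m n mzero A = mzero"
  unfolding matmul_def mzero_def by simp
lemma matmul_mzero_right: "matmul m n A mzero = mzero"
  unfolding matmul_def mzero_def by simp

lemma mpow_Suc_right: assumes "Q \<in> smat m n" shows "matmul m n (mpow m n Q k) Q = mpow m n Q (Suc k)"
proof (induction k)
  case 0 then show ?case using assms by (simp add: matmul_midm_left matmul_midm_right)
next
  case (Suc k)
  have "matmul m n (mpow m n Q (Suc k)) Q = matmul m n Q (matmul m n (mpow m n Q k) Q)"
    by (simp add: matmul_assoc)
  also have "\<dots> = mpow m n Q (Suc (Suc k))" using Suc by simp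
  finally show ?case .
qed

lemma mpow_smat: "Q \<in> smat m n \<Longrightarrow> mpow m n Q k \<in> smat m n"
  by (induction k) (simp_all add: Emat_smat[OF midm_Emat] matmul_smat)

definition tele :: "nat \<Rightarrow> nat \<Rightarrow> Defs.mat \<Rightarrow> nat \<Rightarrow> Defs.mat" where
  "tele m n Q K = msum (\<lambda>k. mscale ((-1)^k) (mpow m n Q k)) {..<K}"

lemma tele_0: "tele m n Q 0 = mzero" by (simp add: tele_def msum_def mzero_def gsum_def gzero_def)
lemma tele_Suc: "tele m n Q (Suc K) = madd (tele m n Q K) (mscale ((-1)^K) (mpow m n Q K))"
  unfolding tele_def msum_def madd_def by (rule ext, rule ext, rule ext) (simp add: gsum_def gadd_def)

lemma tele_left: assumes Q: "Q \<in> smat m n"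
  shows "matmul m n (tele m n Q K) (madd (midm m n) Q) = madd (midm m n) (mscale (- ((-1)^K)) (mpow m n Q K))"
proof (induction K)
  case 0
  show ?case unfolding tele_0 matmul_mzero_left by (rule ext, rule ext, rule ext)
    (simp add: madd_def mscale_def mzero_def gadd_def gscale_def gzero_def)
next
  case (Suc K)
  have P: "matmul m n (mpow m n Q K) (madd (midm m n) Q) = madd (mpow m n Q K) (mpow m n Q (Suc K))"
    by (simp only: matmul_madd_right matmul_midm_right[OF mpow_smat[OF Q]] mpow_Suc_right[OF Q])
  show ?case unfolding tele_Suc matmul_madd_left matmul_mscale_left Suc P
    by (rule ext, rule ext, rule ext) (simp add: madd_def mscale_def gadd_def gscale_def algebra_simps)
qed

lemma tele_right: assumes Q: "Q \<in> smat m n"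
  shows "matmul m n (madd (midm m n) Q) (tele m n Q K) = madd (midm m n) (mscale (- ((-1)^K)) (mpow m n Q K))"
proof (induction K)
  case 0
  show ?case unfolding tele_0 matmul_mzero_right by (rule ext, rule ext, rule ext)
    (simp add: madd_def mscale_def mzero_def gadd_def gscale_def gzero_def)
next
  case (Suc K)
  have P: "matmul m n (madd (midm m n) Q) (mpow m n Q K) = madd (mpow m n Q K) (mpow m n Q (Suc K))"
    by (simp only: matmul_madd_left matmul_midm_left[OF mpow_smat[OF Q]] mpow.simps)
  show ?case unfolding tele_Suc matmul_madd_right matmul_mscale_right Suc P
    by (rule ext, rule ext, rule ext) (simp add: madd_def mscale_def gadd_def gscale_def algebra_simps)
qed

definition lvl :: "nat set set \<Rightarrow> nat set \<Rightarrow> nat \<Rightarrow> grass \<Rightarrow> bool" where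
  "lvl Gs G k a \<longleftrightarrow> (\<forall>U. a U \<noteq> 0 \<longrightarrow> U \<subseteq> G \<and> k \<le> card U)"

lemma lvl_gmul: assumes "finite G" "lvl Gs G k a" "lvl Gs G l b" shows "lvl Gs G (k + l) (gmul a b)"
  unfolding lvl_def
proof (intro allI impI)
  fix U assume "gmul a b U \<noteq> 0"
  then obtain S where S: "finite U" "S \<subseteq> U" "a S \<noteq> 0" "b (U - S) \<noteq> 0" using gmul_nz by blast
  have "S \<subseteq> G" "k \<le> card S" using S(3) assms(2) unfolding lvl_def by blast+
  moreover have "U - S \<subseteq> G" "l \<le> card (U - S)" using S(4) assms(3) unfolding lvl_def by blast+
  moreover have "card U = card S + card (U - S)" by (rule card_split[OF S(1,2)])
  ultimately show "U \<subseteq> G \<and> k + l \<le> card U" by auto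
qed

lemma lvl_gsum: "(\<And>x. x \<in> A \<Longrightarrow> lvl Gs G k (f x)) \<Longrightarrow> lvl Gs G k (gsum f A)"
  unfolding lvl_def gsum_def
proof (intro allI impI)
  fix U assume h: "\<And>x. x \<in> A \<Longrightarrow> \<forall>U. f x U \<noteq> 0 \<longrightarrow> U \<subseteq> G \<and> k \<le> card U" and "(\<Sum>x\<in>A. f x U) \<noteq> 0"
  then obtain x where "x \<in> A" "f x U \<noteq> 0" by (meson sum.neutral)
  thus "U \<subseteq> G \<and> k \<le> card U" using h by blast
qed

lemma lvl_gscale: "lvl Gs G k a \<Longrightarrow> lvl Gs G k (gscale c a)" by (simp add: lvl_def gscale_def)
lemma lvl_gzero: "lvl Gs G k gzero" by (simp add: lvl_def gzero_def)
lemma lvl_gone: "lvl Gs G 0 gone" by (simp add: lvl_def gone_def)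
lemma lvl_big: assumes "finite G" "lvl Gs G k a" "card G < k" shows "a = gzero"
proof (rule ext)
  fix U show "a U = gzero U"
  proof (rule ccontr)
    assume "a U \<noteq> gzero U"
    hence "a U \<noteq> 0" by (simp add: gzero_def)
    hence u: "U \<subseteq> G" "k \<le> card U" using assms(2) unfolding lvl_def by blast+
    have "card U \<le> card G" by (rule card_mono[OF assms(1) u(1)])
    thus False using u(2) assms(3) by linarith
  qed
qed

definition mlvl :: "nat set \<Rightarrow> nat \<Rightarrow> Defs.mat \<Rightarrow> bool" where "mlvl G k M \<longleftrightarrow> (\<forall>i j. lvl {} G k (M i j))"

lemma mlvl_matmul: "finite G \<Longrightarrow> mlvl G k A \<Longrightarrow> mlvl G l B \<Longrightarrow> mlvl G (k + l) (matmul m n A B)"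
  unfolding mlvl_def matmul_def by (intro allI lvl_gsum lvl_gmul) auto
lemma mlvl_midm: "mlvl G 0 (midm m n)" by (simp add: mlvl_def midm_def lvl_gone lvl_gzero)
lemma mlvl_Emb: "mlvl G 0 (Emb C)" by (simp add: mlvl_def Emb_def lvl_gone lvl_gscale)
lemma mlvl_mpow: "finite G \<Longrightarrow> mlvl G 1 Q \<Longrightarrow> mlvl G k (mpow m n Q k)"
proof (induction k)
  case 0 then show ?case by (simp add: mlvl_midm)
next
  case (Suc k) then show ?case using mlvl_matmul[of G 1 Q k "mpow m n Q k" m n] by simp
qed
lemma mlvl_zero: assumes "finite G" "mlvl G k M" "card G < k" shows "M = mzero"
  using lvl_big[OF assms(1) _ assms(3)] assms(2) unfolding mlvl_def mzero_def by blast


definition xpath :: "nat \<Rightarrow> nat \<Rightarrow> Defs.mat \<Rightarrow> complex \<Rightarrow> Defs.mat" where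
  "xpath m n X t = (\<lambda>i j. gadd (X i j) (gscale t (midm m n i j)))"

definition Pe :: "nat \<Rightarrow> (nat \<Rightarrow> nat \<Rightarrow> complex) \<Rightarrow> (nat \<Rightarrow> nat \<Rightarrow> complex)" where
  "Pe m D = (\<lambda>i j. if spar m i = spar m j then D i j else 0)"

lemma cmul_Pe_right:
  assumes B: "\<And>i k. spar m i \<noteq> spar m k \<Longrightarrow> B i k = 0" and e: "cmul N B D = cid N"
  shows "cmul N B (Pe m D) = cid N"
proof (rule ext, rule ext)
  fix i j
  show "cmul N B (Pe m D) i j = cid N i j"
  proof (cases "spar m i = spar m j")
    case True
    have "cmul N B (Pe m D) i j = cmul N B D i j"
      unfolding cmul_def by (rule sum.cong) (use True B in \<open>auto simp: Pe_def\<close>)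
    thus ?thesis using e by simp
  next
    case False
    have "cmul N B (Pe m D) i j = 0"
      unfolding cmul_def by (rule sum.neutral) (use False B in \<open>auto simp: Pe_def\<close>)
    moreover have "cid N i j = 0" using False by (auto simp: cid_def)
    ultimately show ?thesis by simp
  qed
qed

lemma cmul_Pe_left:
  assumes B: "\<And>i k. spar m i \<noteq> spar m k \<Longrightarrow> B i k = 0" and e: "cmul N D B = cid N"
  shows "cmul N (Pe m D) B = cid N"
proof (rule ext, rule ext)
  fix i j
  show "cmul N (Pe m D) B i j = cid N i j"
  proof (cases "spar m i = spar m j")
    case True
    have "cmul N (Pe m D) B i j = cmul N D B i j"
      unfolding cmul_def by (rule sum.cong) (use True B in \<open>auto simp: Pe_def\<close>)
    thus ?thesis using e by simp
  next
    case False
    have "cmul N (Pe m D) B i j = 0"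
      unfolding cmul_def by (rule sum.neutral) (use False B in \<open>auto simp: Pe_def\<close>)
    moreover have "cid N i j = 0" using False by (auto simp: cid_def)
    ultimately show ?thesis by simp
  qed
qed

lemma xpath_Emat: assumes X: "X \<in> Emat m n" shows "xpath m n X t \<in> Emat m n"
proof -
  have "xpath m n X t = madd X (mscale t (midm m n))" by (simp add: xpath_def madd_def mscale_def)
  thus ?thesis by (simp add: madd_Emat[OF X] mscale_Emat[OF midm_Emat])
qed

lemma xpath_0: "xpath m n X 0 = X"
  by (simp add: xpath_def)

lemma xpath_GL: assumes X: "X \<in> Emat m n"
  shows "\<exists>Z. finite Z \<and> (\<forall>t. t \<notin> Z \<longrightarrow> xpath m n X t \<in> GLs m n)"
proof -
  define N where "N = m+2*n"
  define B0 where "B0 = (\<lambda>i j. X i j {})"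
  have B0out: "B0 i j = 0" if "\<not> (i < N \<and> j < N)" for i j
    using smat_out[OF Emat_smat[OF X], of i j] that by (simp add: B0_def N_def gzero_def)
  have B0even: "B0 i j = 0" if "spar m i \<noteq> spar m j" for i j
    using Emat_homog[OF X, of i j] that by (auto simp: B0_def ghomog_def)
  obtain Z where fZ: "finite Z" and Zp: "\<And>t. t \<notin> Z \<Longrightarrow> (\<exists>D. (\<forall>i j. \<not> (i < N \<and> j < N) \<longrightarrow> D i j = 0) \<and>
     cmul N (\<lambda>i j. B0 i j + (if i < N \<and> i = j then t else 0)) D = cid N \<and>
     cmul N D (\<lambda>i j. B0 i j + (if i < N \<and> i = j then t else 0)) = cid N)"
    using cinv_cofinite[of N B0] B0out by blast
  define Nm where "Nm = (\<lambda>i j S. if S = {} then 0 else X i j S)"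
  have Nm_E: "Nm \<in> Emat m n"
  proof (rule EmatI)
    show "Nm \<in> smat m n"
    proof (rule smatI)
      show "Nm i j \<in> gcarrier" for i j
        by (rule gcarrier_mono[OF smat_carrier[OF Emat_smat[OF X], of i j]]) (simp add: Nm_def split: if_splits)
      show "Nm i j = gzero" if "\<not> (i < m + 2 * n \<and> j < m + 2 * n)" for i j
        using smat_out[OF Emat_smat[OF X] that] unfolding Nm_def gzero_def by (simp add: fun_eq_iff)
    qed
    show "ghomog (spar m i \<noteq> spar m j) (Nm i j)" for i j
      using Emat_homog[OF X, of i j] by (simp add: ghomog_def Nm_def)
  qed
  define GG where "GG = {S. \<exists>i<N. \<exists>j<N. X i j S \<noteq> 0}"
  have GG_eq: "GG = (\<Union>i<N. \<Union>j<N. {S. X i j S \<noteq> 0})" by (auto simp: GG_def)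
  have "finite GG" unfolding GG_eq
    using smat_carrier[OF Emat_smat[OF X]] by (auto simp: gcarrier_def)
  moreover have "\<forall>S\<in>GG. finite S" using smat_carrier[OF Emat_smat[OF X]] by (auto simp: GG_def gcarrier_def)
  ultimately have fG: "finite (\<Union>GG)" by simp
  define G where "G = \<Union>GG"
  have fG': "finite G" using fG by (simp add: G_def)
  have Nm_lvl: "mlvl G 1 Nm" unfolding mlvl_def lvl_def
  proof (intro allI impI)
    fix i j U assume nz: "Nm i j U \<noteq> 0"
    hence U: "U \<noteq> {}" "X i j U \<noteq> 0" by (auto simp: Nm_def split: if_splits)
    have ij: "i < N \<and> j < N"
    proof (rule ccontr)
      assume "\<not> (i < N \<and> j < N)"
      hence "X i j = gzero" using smat_out[OF Emat_smat[OF X]] by (simp add: N_def)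
      thus False using U(2) by (simp add: gzero_def)
    qed
    have "U \<in> GG" using ij U(2) by (auto simp: GG_def)
    hence UG: "U \<subseteq> G" by (auto simp: G_def)
    have "finite U" using UG fG' finite_subset by blast
    hence "1 \<le> card U" using U(1) by (simp add: Suc_le_eq card_gt_0_iff)
    thus "U \<subseteq> G \<and> 1 \<le> card U" using UG by simp
  qed
  show ?thesis
  proof (intro exI conjI allI impI)
    show "finite Z" by (rule fZ)
    fix t assume t: "t \<notin> Z"
    define Bc where "Bc = (\<lambda>i j. B0 i j + (if i < N \<and> i = j then t else 0))"
    obtain D where D0: "\<And>i j. \<not> (i < N \<and> j < N) \<Longrightarrow> D i j = 0"
      and D1: "cmul N Bc D = cid N" and D2: "cmul N D Bc = cid N"
      using Zp[OF t] unfolding Bc_def by blast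
    have Bc_even: "Bc i k = 0" if "spar m i \<noteq> spar m k" for i k
      using that B0even by (auto simp: Bc_def)
    have P1: "cmul N Bc (Pe m D) = cid N" by (rule cmul_Pe_right[OF Bc_even D1])
    have P2: "cmul N (Pe m D) Bc = cid N" by (rule cmul_Pe_left[OF Bc_even D2])
    define Bp where "Bp = Emb (Pe m D)"
    have Bp_E: "Bp \<in> Emat m n" unfolding Bp_def
      by (rule Emb_Emat) (auto simp: Pe_def D0 N_def)
    have dec: "xpath m n X t = madd (Emb Bc) Nm"
      by (rule ext, rule ext, rule ext)
         (simp add: xpath_def madd_def Emb_def Nm_def Bc_def B0_def gadd_def gscale_def midm_def gone_def gzero_def N_def)
    have L1: "matmul m n Bp (xpath m n X t) = madd (midm m n) (matmul m n Bp Nm)"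
      unfolding dec matmul_madd_right Bp_def Emb_mult using P2 Emb_cid[of m n] by (simp add: N_def)
    have L2: "matmul m n (xpath m n X t) Bp = madd (midm m n) (matmul m n Nm Bp)"
      unfolding dec matmul_madd_left Bp_def Emb_mult using P1 Emb_cid[of m n] by (simp add: N_def)
    define Q where "Q = matmul m n Bp Nm"
    define Q' where "Q' = matmul m n Nm Bp"
    have QE: "Q \<in> Emat m n" "Q' \<in> Emat m n" unfolding Q_def Q'_def
      by (simp_all add: matmul_Emat Bp_E Nm_E)
    have Ql: "mlvl G 1 Q" unfolding Q_def using mlvl_matmul[OF fG' mlvl_Emb Nm_lvl, of m n] by (simp add: Bp_def)
    have Ql': "mlvl G 1 Q'" unfolding Q'_def using mlvl_matmul[OF fG' Nm_lvl mlvl_Emb, of m n] by (simp add: Bp_def)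
    define K where "K = Suc (card G)"
    have QK: "mpow m n Q K = mzero" by (rule mlvl_zero[OF fG' mlvl_mpow[OF fG' Ql]]) (simp add: K_def)
    have QK': "mpow m n Q' K = mzero" by (rule mlvl_zero[OF fG' mlvl_mpow[OF fG' Ql']]) (simp add: K_def)
    have fin: "madd (midm m n) (mscale c mzero) = midm m n" for c
      by (rule ext, rule ext) (simp add: madd_def mscale_def mzero_def)
    define H where "H = matmul m n (tele m n Q K) Bp"
    define H' where "H' = matmul m n Bp (tele m n Q' K)"
    have HX: "matmul m n H (xpath m n X t) = midm m n"
      unfolding H_def matmul_assoc L1 Q_def[symmetric] tele_left[OF Emat_smat[OF QE(1)]] QK fin ..
    have XH: "matmul m n (xpath m n X t) H' = midm m n"
      unfolding H'_def matmul_assoc[symmetric] L2 Q'_def[symmetric] tele_right[OF Emat_smat[OF QE(2)]] QK' fin ..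
    have teleE: "tele m n Q K \<in> Emat m n" "tele m n Q' K \<in> Emat m n" unfolding tele_def
      by (auto intro!: msum_Emat mscale_Emat mpow_Emat QE)
    have HE: "H \<in> Emat m n" "H' \<in> Emat m n" unfolding H_def H'_def
      by (simp_all add: matmul_Emat teleE Bp_E)
    have XE: "xpath m n X t \<in> Emat m n" by (rule xpath_Emat[OF X])
    have "H' = H" by (rule inv_unique[OF Emat_smat[OF XE] Emat_smat[OF HE(2)] Emat_smat[OF HE(1)] XH HX])
    thus "xpath m n X t \<in> GLs m n" unfolding GLs_def using XE HE HX XH by auto
  qed
qed


fun sg :: "nat \<Rightarrow> nat list \<Rightarrow> nat list \<Rightarrow> complex" where
  "sg m (k # K) (j # J) = (if tpar m K \<and> (spar m k \<noteq> spar m j) then -1 else 1) * sg m K J"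
| "sg m _ _ = 1"

lemma gprod_Cons: "gprod_list (map (\<lambda>(i, j). X i j) ((k, j) # kj)) = gmul (X k j) (gprod_list (map (\<lambda>(i, j). X i j) kj))"
  by simp

lemma tcoef_sign: assumes X: "X \<in> Emat m n"
  shows "length K = length J \<Longrightarrow> tcoef m K (map (\<lambda>j i. X i j) J) = gscale (sg m K J) (gprod_list (map (\<lambda>(i, j). X i j) (zip K J)))"
proof (induction K arbitrary: J)
  case Nil then show ?case by simp
next
  case (Cons k K)
  then obtain j J' where J: "J = j # J'" "length K = length J'" by (cases J) auto
  have h: "galpha (tpar m K) (X k j) = (if tpar m K \<and> (spar m k \<noteq> spar m j) then gscale (-1) (X k j) else X k j)"
    by (rule ghomog_galpha[OF Emat_homog[OF X]])
  show ?case unfolding J(1) using Cons.IH[OF J(2)]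
    by (simp add: h gmul_gscale_left gmul_gscale_right gscale_gscale)
qed

lemma finite_monoms: "finite (monoms m n r)"
proof -
  have "monoms m n r = {xs. set xs \<subseteq> {..<m+2*n} \<times> {..<m+2*n} \<and> length xs = r}" by (auto simp: monoms_def)
  thus ?thesis by (simp add: finite_lists_length_eq)
qed

lemma gsum_subset: assumes "finite A" "B \<subseteq> A" "\<And>x. x \<in> A - B \<Longrightarrow> f x = gzero"
  shows "gsum f A = gsum f B"
  unfolding gsum_def
proof (rule ext)
  fix S show "(\<Sum>k\<in>A. f k S) = (\<Sum>k\<in>B. f k S)"
    by (rule sum.mono_neutral_right) (use assms in \<open>auto simp: gzero_def\<close>)
qed

lemma Psi_poly: assumes c: "c \<in> TVdual m n r" and J: "J \<in> tuples m n r"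
  shows "Psi m n r c J \<in> Defs.Poly m n r"
proof -
  define d where "d \<kappa> = (if map snd \<kappa> = J then gscale (sg m (map fst \<kappa>) J) (c (map fst \<kappa>)) else gzero)" for \<kappa>
  have dc: "d \<kappa> \<in> gcarrier" for \<kappa> unfolding d_def by (simp add: gcarrier_gscale TVdual_carrier[OF c])
  have lenJ: "length J = r" using J by (simp add: tuples_def)
  have eq: "Leval m n r c (map (\<lambda>j. matvec m n X (basisvec j)) J) =
     gsum (\<lambda>\<kappa>. gmul (d \<kappa>) (gprod_list (map (\<lambda>(i, j). X i j) \<kappa>))) (monoms m n r)" if X: "X \<in> Emat m n" for X
  proof -
    have "Leval m n r c (map (\<lambda>j. matvec m n X (basisvec j)) J) =
        gsum (\<lambda>K. gmul (c K) (tcoef m K (map (\<lambda>j i. X i j) J))) (tuples m n r)"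
      unfolding Leval_def cols_eq[OF Emat_smat[OF X] J] ..
    also have "\<dots> = gsum (\<lambda>K. gmul (d (zip K J)) (gprod_list (map (\<lambda>(i, j). X i j) (zip K J)))) (tuples m n r)"
    proof (rule gsum_cong)
      fix K assume K: "K \<in> tuples m n r"
      have l: "length K = length J" using K lenJ by (simp add: tuples_def)
      show "gmul (c K) (tcoef m K (map (\<lambda>j i. X i j) J)) = gmul (d (zip K J)) (gprod_list (map (\<lambda>(i, j). X i j) (zip K J)))"
        using l by (simp add: tcoef_sign[OF X l] d_def gmul_gscale_left gmul_gscale_right)
    qed
    also have "\<dots> = gsum (\<lambda>\<kappa>. gmul (d \<kappa>) (gprod_list (map (\<lambda>(i, j). X i j) \<kappa>))) ((\<lambda>K. zip K J) ` tuples m n r)"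
    proof (rule gsum_reindex[symmetric])
      show "inj_on (\<lambda>K. zip K J) (tuples m n r)"
      proof (rule inj_onI)
        fix K K' assume "K \<in> tuples m n r" "K' \<in> tuples m n r" "zip K J = zip K' J"
        moreover have "length K = length J" "length K' = length J"
          using \<open>K \<in> tuples m n r\<close> \<open>K' \<in> tuples m n r\<close> lenJ by (simp_all add: tuples_def)
        ultimately show "K = K'" by (metis map_fst_zip)
      qed
    qed
    also have "\<dots> = gsum (\<lambda>\<kappa>. gmul (d \<kappa>) (gprod_list (map (\<lambda>(i, j). X i j) \<kappa>))) (monoms m n r)"
    proof (rule gsum_subset[symmetric])
      show "finite (monoms m n r)" by (rule finite_monoms)
      show "(\<lambda>K. zip K J) ` tuples m n r \<subseteq> monoms m n r"
      proof
        fix \<kappa> assume "\<kappa> \<in> (\<lambda>K. zip K J) ` tuples m n r"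
        then obtain K where "K \<in> tuples m n r" "\<kappa> = zip K J" by blast
        have sz: "set (zip K J) \<subseteq> set K \<times> set J" by (auto dest: set_zip_leftD set_zip_rightD)
        have "length K = r" "set K \<subseteq> {..<m+2*n}" "set J \<subseteq> {..<m+2*n}"
          using \<open>K \<in> tuples m n r\<close> J by (simp_all add: tuples_def)
        thus "\<kappa> \<in> monoms m n r" using sz lenJ \<open>\<kappa> = zip K J\<close> unfolding monoms_def by auto
      qed
      fix \<kappa> assume k: "\<kappa> \<in> monoms m n r - (\<lambda>K. zip K J) ` tuples m n r"
      show "gmul (d \<kappa>) (gprod_list (map (\<lambda>(i, j). X i j) \<kappa>)) = gzero"
      proof (cases "map snd \<kappa> = J")
        case True
        have "map fst \<kappa> \<in> tuples m n r" using k by (auto simp: monoms_def tuples_def)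
        moreover have "\<kappa> = zip (map fst \<kappa>) J" using True zip_map_fst_snd[of \<kappa>] by simp
        ultimately show ?thesis using k by blast
      qed (simp add: d_def)
    qed
    finally show ?thesis .
  qed
  show ?thesis unfolding Defs.Poly_def
  proof (intro CollectI exI conjI allI)
    show "d \<kappa> \<in> gcarrier" for \<kappa> by (rule dc)
    show "Psi m n r c J = (\<lambda>X. if X \<in> Emat m n
        then gsum (\<lambda>\<kappa>. gmul (d \<kappa>) (gprod_list (map (\<lambda>(i, j). X i j) \<kappa>))) (monoms m n r) else gzero)"
      by (rule ext) (simp add: Psi_def J eq)
  qed
qed

lemma Psi_TP: assumes c: "c \<in> TVdual m n r" shows "Psi m n r c \<in> TP m n r"
  unfolding TP_def using Psi_poly[OF c] by (auto simp: Psi_def)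

lemma Psi_Rhat: assumes c: "c \<in> TVdual m n r" and g: "g \<in> GLs m n"
  shows "Rhat m n r g (Psi m n r c) = Psi m n r c"
proof (rule ext, rule ext)
  fix J X
  show "Rhat m n r g (Psi m n r c) J X = Psi m n r c J X"
  proof (cases "J \<in> tuples m n r \<and> X \<in> Emat m n")
    case True
    hence J: "J \<in> tuples m n r" and X: "X \<in> Emat m n" by auto
    note gp = minv_props[OF g]
    have gE: "g \<in> Emat m n" using g by (rule GLs_Emat)
    have XgE: "matmul m n X g \<in> Emat m n" by (rule matmul_Emat[OF X gE])
    define ws where "ws = map (\<lambda>j. matvec m n (minv m n g) (basisvec j)) J"
    have lws: "length ws = r" using J by (simp add: ws_def tuples_def)
    have "Rhat m n r g (Psi m n r c) J X = Feval m n r (Psi m n r c) (matmul m n X g) ws"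
      using J X by (simp add: Rhat_def ws_def)
    also have "\<dots> = gsum (\<lambda>K. gmul (Leval m n r c (map (\<lambda>k i. matmul m n X g i k) K)) (tcoef m K ws)) (tuples m n r)"
      unfolding Feval_def
      by (rule gsum_cong) (simp add: Psi_def XgE cols_eq[OF Emat_smat[OF XgE]])
    also have "\<dots> = Leval m n r c (map (matvec m n (matmul m n X g)) ws)"
      by (rule Leval_ML[OF XgE lws, symmetric])
    also have "map (matvec m n (matmul m n X g)) ws = map (\<lambda>j. matvec m n X (basisvec j)) J"
    proof -
      have "matvec m n (matmul m n X g) (matvec m n (minv m n g) v) = matvec m n X v" for v
        by (simp add: matvec_matmul[symmetric] matmul_assoc gp matmul_midm_right Emat_smat[OF X])
      thus ?thesis by (simp add: ws_def)
    qed
    finally show ?thesis using J X by (simp add: Psi_def)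
  qed (auto simp: Rhat_def Psi_def)
qed

lemma OSp_GLs: "g \<in> OSp m n b \<Longrightarrow> g \<in> GLs m n" by (simp add: OSp_def)

lemma Psi_Lhat: assumes c: "c \<in> TVinv m n r b" and g: "g \<in> OSp m n b"
  shows "Lhat m n r g (Psi m n r c) = Psi m n r c"
proof (rule ext, rule ext)
  fix J X
  show "Lhat m n r g (Psi m n r c) J X = Psi m n r c J X"
  proof (cases "J \<in> tuples m n r \<and> X \<in> Emat m n")
    case True
    hence J: "J \<in> tuples m n r" and X: "X \<in> Emat m n" by auto
    have gG: "g \<in> GLs m n" by (rule OSp_GLs[OF g])
    note gp = minv_props[OF gG]
    have cd: "c \<in> TVdual m n r" and inv: "rho_dual m n r g c = c" using c g by (auto simp: TVinv_def)
    have hX: "matmul m n (minv m n g) X \<in> Emat m n" by (rule matmul_Emat[OF gp(1) X])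
    define ws where "ws = map (\<lambda>j. matvec m n X (basisvec j)) J"
    have lws: "length ws = r" using J by (simp add: ws_def tuples_def)
    have "Lhat m n r g (Psi m n r c) J X = Leval m n r c (map (\<lambda>j. matvec m n (matmul m n (minv m n g) X) (basisvec j)) J)"
      using J X hX by (simp add: Lhat_def Psi_def)
    also have "\<dots> = Leval m n r c (map (matvec m n (minv m n g)) ws)"
      by (simp add: ws_def matvec_matmul comp_def)
    also have "\<dots> = gsum (\<lambda>K. gmul (Leval m n r c (map (\<lambda>k i. minv m n g i k) K)) (tcoef m K ws)) (tuples m n r)"
      by (rule Leval_ML[OF gp(1) lws])
    also have "\<dots> = gsum (\<lambda>K. gmul (c K) (tcoef m K ws)) (tuples m n r)"
    proof (rule gsum_cong)
      fix K assume K: "K \<in> tuples m n r"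
      have "c K = rho_dual m n r g c K" using inv by simp
      also have "\<dots> = Leval m n r c (map (\<lambda>k i. minv m n g i k) K)"
        using K by (simp add: rho_dual_def cols_eq[OF Emat_smat[OF gp(1)] K])
      finally show "gmul (Leval m n r c (map (\<lambda>k i. minv m n g i k) K)) (tcoef m K ws) = gmul (c K) (tcoef m K ws)"
        by simp
    qed
    finally show ?thesis using J X by (simp add: Psi_def Leval_def ws_def)
  qed (auto simp: Lhat_def Psi_def)
qed

lemma midm_basis: "j < m+2*n \<Longrightarrow> matvec m n (midm m n) (basisvec j) = basisvec j"
  by (simp add: matvec_basis[OF Emat_smat[OF midm_Emat]]) (auto simp: midm_def basisvec_def)

lemma Psi_at_id: assumes c: "c \<in> TVdual m n r" and J: "J \<in> tuples m n r"
  shows "Psi m n r c J (midm m n) = c J"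
proof -
  have eq: "map (\<lambda>j. matvec m n (midm m n) (basisvec j)) J = map basisvec J"
    using J by (auto simp: tuples_def midm_basis)
  have "Psi m n r c J (midm m n) = Leval m n r c (map (\<lambda>j. matvec m n (midm m n) (basisvec j)) J)"
    using J by (simp add: Psi_def midm_Emat)
  also have "\<dots> = Leval m n r c (map basisvec J)" by (simp only: eq)
  finally show ?thesis using Leval_basis[OF c J] by simp
qed

lemma Psi_inj: "inj_on (Psi m n r) (TVdual m n r)"
proof (rule inj_onI)
  fix c d assume c: "c \<in> TVdual m n r" and d: "d \<in> TVdual m n r" and e: "Psi m n r c = Psi m n r d"
  show "c = d"
  proof (rule ext)
    fix J show "c J = d J"
    proof (cases "J \<in> tuples m n r")
      case True
      thus ?thesis using Psi_at_id[OF c True] Psi_at_id[OF d True] e by simp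
    qed (simp add: TVdual_out[OF c] TVdual_out[OF d])
  qed
qed

lemma Leval_add: "Leval m n r (tv_add c d) ws = gadd (Leval m n r c ws) (Leval m n r d ws)"
  unfolding Leval_def tv_add_def by (simp only: gmul_gadd_left gsum_gadd)
lemma Leval_smul: "Leval m n r (tv_smul a c) ws = gmul a (Leval m n r c ws)"
  unfolding Leval_def tv_smul_def by (simp only: gmul_assoc gmul_gsum_right)

lemma Psi_add: "Psi m n r (tv_add c d) = tp_add (Psi m n r c) (Psi m n r d)"
proof (rule ext, rule ext)
  fix J X show "Psi m n r (tv_add c d) J X = tp_add (Psi m n r c) (Psi m n r d) J X"
    unfolding Psi_def tp_add_def by (simp only: Leval_add split: if_split) simp
qed

lemma Psi_smul: "Psi m n r (tv_smul a c) = tp_smul a (Psi m n r c)"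
proof (rule ext, rule ext)
  fix J X show "Psi m n r (tv_smul a c) J X = tp_smul a (Psi m n r c) J X"
    unfolding Psi_def tp_smul_def by (simp only: Leval_smul split: if_split) simp
qed


definition pf :: "(complex \<Rightarrow> complex) \<Rightarrow> bool" where "pf h \<longleftrightarrow> (\<exists>p. \<forall>t. h t = poly p t)"
definition ptf :: "(complex \<Rightarrow> grass) \<Rightarrow> bool" where "ptf f \<longleftrightarrow> (\<forall>S. pf (\<lambda>t. f t S))"

lemma pf_const: "pf (\<lambda>t. c)" unfolding pf_def by (rule exI[of _ "[:c:]"]) simp
lemma pf_id: "pf (\<lambda>t. t)" unfolding pf_def by (rule exI[of _ "[:0, 1:]"]) simp
lemma pf_add: "pf f \<Longrightarrow> pf g \<Longrightarrow> pf (\<lambda>t. f t + g t)"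
  unfolding pf_def by (metis poly_add)
lemma pf_diff: "pf f \<Longrightarrow> pf g \<Longrightarrow> pf (\<lambda>t. f t - g t)"
  unfolding pf_def by (metis poly_diff)
lemma pf_mult: "pf f \<Longrightarrow> pf g \<Longrightarrow> pf (\<lambda>t. f t * g t)"
  unfolding pf_def by (metis poly_mult)
lemma pf_sum: "finite A \<Longrightarrow> (\<And>k. k \<in> A \<Longrightarrow> pf (f k)) \<Longrightarrow> pf (\<lambda>t. \<Sum>k\<in>A. f k t)"
proof (induction A rule: finite_induct)
  case empty then show ?case by (simp add: pf_const)
next
  case (insert x F) then show ?case by (simp add: pf_add)
qed
lemma pf_cofinite_zero: assumes "pf h" "finite Z" "\<And>t. t \<notin> Z \<Longrightarrow> h t = 0" shows "h t = 0"
proof -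
  obtain p where p: "\<And>t. h t = poly p t" using assms(1) unfolding pf_def by blast
  show ?thesis
  proof (cases "p = 0")
    case True thus ?thesis by (simp add: p)
  next
    case False
    have "finite {t. poly p t = 0}" by (rule poly_roots_finite[OF False])
    moreover have "UNIV - Z \<subseteq> {t. poly p t = 0}" using assms(3) p by auto
    ultimately have "finite (UNIV - Z)" by (rule finite_subset[rotated])
    hence "finite (UNIV :: complex set)" using assms(2) by (metis Diff_infinite_finite)
    thus ?thesis using infinite_UNIV_char_0 by blast
  qed
qed

lemma ptf_const: "ptf (\<lambda>t. a)" by (simp add: ptf_def pf_const)
lemma ptf_gadd: "ptf f \<Longrightarrow> ptf g \<Longrightarrow> ptf (\<lambda>t. gadd (f t) (g t))"
  by (simp add: ptf_def gadd_def pf_add)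
lemma ptf_gscale_t: "ptf (\<lambda>t. gscale t a)"
  unfolding ptf_def gscale_def by (simp add: pf_mult pf_id pf_const)
lemma ptf_gsum: "finite A \<Longrightarrow> (\<And>k. k \<in> A \<Longrightarrow> ptf (f k)) \<Longrightarrow> ptf (\<lambda>t. gsum (\<lambda>k. f k t) A)"
  unfolding ptf_def gsum_def by (simp add: pf_sum)
lemma ptf_gmul: assumes "ptf f" "ptf g" shows "ptf (\<lambda>t. gmul (f t) (g t))"
  unfolding ptf_def
proof
  fix U show "pf (\<lambda>t. gmul (f t) (g t) U)"
  proof (cases "finite U")
    case True
    have "pf (\<lambda>t. \<Sum>S\<in>Pow U. gsgn S (U-S) * f t S * g t (U-S))"
      using assms unfolding ptf_def by (intro pf_sum pf_mult pf_const) (simp_all add: True)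
    thus ?thesis by (simp add: gmul_fin True)
  qed (simp add: pf_const)
qed
lemma ptf_galpha: "ptf f \<Longrightarrow> ptf (\<lambda>t. galpha p (f t))"
  unfolding ptf_def galpha_def by (cases p) (simp_all add: pf_mult pf_const)

lemma ptf_gprod: "(\<And>x. x \<in> set ks \<Longrightarrow> ptf (\<lambda>t. e t x)) \<Longrightarrow> ptf (\<lambda>t. gprod_list (map (e t) ks))"
proof (induction ks)
  case Nil then show ?case by (simp add: ptf_const)
next
  case (Cons a ks) then show ?case by (simp add: ptf_gmul)
qed

lemma ptf_tcoef: assumes "\<And>i j. ptf (\<lambda>t. M t i j)"
  shows "ptf (\<lambda>t. tcoef m K (map (\<lambda>j i. M t i j) J))"
proof (induction K arbitrary: J)
  case Nil then show ?case by (cases J) (simp_all add: ptf_const)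
next
  case (Cons k K) then show ?case
    by (cases J) (simp_all add: ptf_const ptf_gmul ptf_galpha assms)
qed

lemma ptf_xpath: "ptf (\<lambda>t. xpath m n X t i j)"
  unfolding xpath_def by (intro ptf_gadd ptf_const ptf_gscale_t)

lemma gprod_carrier: "(\<And>x. x \<in> set xs \<Longrightarrow> x \<in> gcarrier) \<Longrightarrow> gprod_list xs \<in> gcarrier"
  by (induction xs) (simp_all add: gcarrier_gmul)

lemma Poly_form: assumes "f \<in> Defs.Poly m n r"
  obtains d where "\<And>\<kappa>. d \<kappa> \<in> gcarrier" "f = (\<lambda>X. if X \<in> Emat m n
            then gsum (\<lambda>\<kappa>. gmul (d \<kappa>) (gprod_list (map (\<lambda>(i, j). X i j) \<kappa>))) (monoms m n r)
            else gzero)"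
  using assms unfolding Defs.Poly_def by blast

lemma Poly_carrier: assumes "f \<in> Defs.Poly m n r" shows "f X \<in> gcarrier"
proof -
  obtain d where d: "\<And>\<kappa>. d \<kappa> \<in> gcarrier" and f: "f = (\<lambda>X. if X \<in> Emat m n
            then gsum (\<lambda>\<kappa>. gmul (d \<kappa>) (gprod_list (map (\<lambda>(i, j). X i j) \<kappa>))) (monoms m n r)
            else gzero)" using Poly_form[OF assms] by blast
  show ?thesis
  proof (cases "X \<in> Emat m n")
    case True
    have "gprod_list (map (\<lambda>(i, j). X i j) \<kappa>) \<in> gcarrier" for \<kappa>
      by (rule gprod_carrier) (auto simp: smat_carrier[OF Emat_smat[OF True]])
    thus ?thesis unfolding f using True finite_monoms d
      by (simp add: gcarrier_gsum gcarrier_gmul)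
  qed (simp add: f)
qed

lemma Poly_out: assumes "f \<in> Defs.Poly m n r" "X \<notin> Emat m n" shows "f X = gzero"
  using assms unfolding Defs.Poly_def by auto

lemma Poly_ptf: assumes "f \<in> Defs.Poly m n r" "X \<in> Emat m n" shows "ptf (\<lambda>t. f (xpath m n X t))"
proof -
  obtain d where d: "\<And>\<kappa>. d \<kappa> \<in> gcarrier" and f: "f = (\<lambda>X. if X \<in> Emat m n
            then gsum (\<lambda>\<kappa>. gmul (d \<kappa>) (gprod_list (map (\<lambda>(i, j). X i j) \<kappa>))) (monoms m n r)
            else gzero)" using Poly_form[OF assms(1)] by blast
  have "ptf (\<lambda>t. gsum (\<lambda>\<kappa>. gmul (d \<kappa>) (gprod_list (map (\<lambda>(i, j). xpath m n X t i j) \<kappa>))) (monoms m n r))"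
  proof (intro ptf_gsum ptf_gmul ptf_const finite_monoms)
    fix \<kappa> show "ptf (\<lambda>t. gprod_list (map (\<lambda>(i, j). xpath m n X t i j) \<kappa>))"
      using ptf_gprod[of \<kappa> "\<lambda>t (i, j). xpath m n X t i j"] by (simp add: case_prod_beta ptf_xpath)
  qed
  thus ?thesis unfolding f using xpath_Emat[OF assms(2)] by simp
qed

lemma Psi_ptf: assumes "J \<in> tuples m n r" "X \<in> Emat m n" shows "ptf (\<lambda>t. Psi m n r c J (xpath m n X t))"
proof -
  have e: "Psi m n r c J (xpath m n X t) = Leval m n r c (map (\<lambda>j i. xpath m n X t i j) J)" for t
    using assms xpath_Emat[OF assms(2)] by (simp add: Psi_def cols_eq[OF Emat_smat[OF xpath_Emat[OF assms(2)]]])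
  show ?thesis unfolding e Leval_def
    by (intro ptf_gsum ptf_gmul ptf_const finite_tuples ptf_tcoef ptf_xpath)
qed

definition cF :: "nat \<Rightarrow> nat \<Rightarrow> nat \<Rightarrow> (nat list \<Rightarrow> Defs.mat \<Rightarrow> grass) \<Rightarrow> (nat list \<Rightarrow> grass)" where
  "cF m n r F = (\<lambda>J. if J \<in> tuples m n r then F J (midm m n) else gzero)"

lemma TP_poly: "F \<in> TP m n r \<Longrightarrow> J \<in> tuples m n r \<Longrightarrow> F J \<in> Defs.Poly m n r"
  unfolding TP_def by (metis (mono_tags, lifting) mem_Collect_eq)
lemma TP_out: "F \<in> TP m n r \<Longrightarrow> J \<notin> tuples m n r \<Longrightarrow> F J = (\<lambda>X. gzero)"
  unfolding TP_def by (metis (mono_tags, lifting) mem_Collect_eq)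

lemma cF_TVdual: assumes "F \<in> TP m n r" shows "cF m n r F \<in> TVdual m n r"
  unfolding TVdual_def cF_def using Poly_carrier[OF TP_poly[OF assms]] by auto

lemma Gamma_GL: assumes F: "F \<in> Gamma m n r" and J: "J \<in> tuples m n r" and Y: "Y \<in> GLs m n"
  shows "F J Y = Psi m n r (cF m n r F) J Y"
proof -
  have FT: "F \<in> TP m n r" using F by (simp add: Gamma_def)
  define g where "g = minv m n Y"
  have gG: "g \<in> GLs m n" and gg: "minv m n g = Y" using minv_GLs[OF Y] by (simp_all add: g_def)
  have inv: "Rhat m n r g F = F" using F gG by (simp add: Gamma_def)
  have YE: "Y \<in> Emat m n" by (rule GLs_Emat[OF Y])
  have Yg: "matmul m n Y g = midm m n" using minv_props(2)[OF Y] by (simp add: g_def)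
  have "F J Y = Rhat m n r g F J Y" using inv by simp
  also have "\<dots> = Feval m n r F (midm m n) (map (\<lambda>j. matvec m n Y (basisvec j)) J)"
    using J YE by (simp add: Rhat_def gg Yg)
  also have "\<dots> = Leval m n r (cF m n r F) (map (\<lambda>j. matvec m n Y (basisvec j)) J)"
    unfolding Feval_def Leval_def by (rule gsum_cong) (simp add: cF_def)
  also have "\<dots> = Psi m n r (cF m n r F) J Y" using J YE by (simp add: Psi_def)
  finally show ?thesis .
qed

lemma Gamma_Psi: assumes F: "F \<in> Gamma m n r" shows "F = Psi m n r (cF m n r F)"
proof (rule ext, rule ext)
  fix J X
  have FT: "F \<in> TP m n r" using F by (simp add: Gamma_def)
  show "F J X = Psi m n r (cF m n r F) J X"
  proof (cases "J \<in> tuples m n r")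
    case J: True
    show ?thesis
    proof (cases "X \<in> Emat m n")
      case X: True
      obtain Z where fZ: "finite Z" and Zp: "\<And>t. t \<notin> Z \<Longrightarrow> xpath m n X t \<in> GLs m n"
        using xpath_GL[OF X] by blast
      show ?thesis
      proof (rule ext)
        fix S
        define h where "h t = F J (xpath m n X t) S - Psi m n r (cF m n r F) J (xpath m n X t) S" for t
        have "pf h" unfolding h_def
          using Poly_ptf[OF TP_poly[OF FT J] X] Psi_ptf[OF J X, of "cF m n r F"]
          unfolding ptf_def by (intro pf_diff) simp_all
        have "h t = 0" if "t \<notin> Z" for t
          using Gamma_GL[OF F J Zp[OF that]] by (simp add: h_def)
        hence "h 0 = 0" by (rule pf_cofinite_zero[OF \<open>pf h\<close> fZ])
        thus "F J X S = Psi m n r (cF m n r F) J X S" by (simp add: h_def xpath_0)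
      qed
    next
      case False
      thus ?thesis using Poly_out[OF TP_poly[OF FT J] False] J by (simp add: Psi_def)
    qed
  next
    case False
    thus ?thesis using TP_out[OF FT False] by (simp add: Psi_def)
  qed
qed


lemma cF_TVinv: assumes F: "F \<in> GammaOSp m n r b" shows "cF m n r F \<in> TVinv m n r b"
proof -
  have FG: "F \<in> Gamma m n r" and FL: "\<And>g. g \<in> OSp m n b \<Longrightarrow> Lhat m n r g F = F"
    using F by (auto simp: GammaOSp_def)
  have FT: "F \<in> TP m n r" using FG by (simp add: Gamma_def)
  have cd: "cF m n r F \<in> TVdual m n r" by (rule cF_TVdual[OF FT])
  have FP: "F = Psi m n r (cF m n r F)" by (rule Gamma_Psi[OF FG])
  have "rho_dual m n r g (cF m n r F) = cF m n r F" if g: "g \<in> OSp m n b" for g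
  proof (rule ext)
    fix J
    have gG: "g \<in> GLs m n" by (rule OSp_GLs[OF g])
    have hE: "minv m n g \<in> Emat m n" by (rule minv_props(1)[OF gG])
    show "rho_dual m n r g (cF m n r F) J = cF m n r F J"
    proof (cases "J \<in> tuples m n r")
      case J: True
      have "rho_dual m n r g (cF m n r F) J = Psi m n r (cF m n r F) J (minv m n g)"
        using J hE by (simp add: rho_dual_def Psi_def)
      also have "\<dots> = F J (minv m n g)" using FP by simp
      also have "\<dots> = F J (matmul m n (minv m n g) (midm m n))"
        by (simp add: matmul_midm_right[OF Emat_smat[OF hE]])
      also have "\<dots> = Lhat m n r g F J (midm m n)" using J by (simp add: Lhat_def midm_Emat)
      also have "\<dots> = F J (midm m n)" using FL[OF g] by simp
      also have "\<dots> = cF m n r F J" using J by (simp add: cF_def)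
      finally show ?thesis .
    next
      case False
      thus ?thesis by (simp add: rho_dual_def cF_def)
    qed
  qed
  thus ?thesis using cd by (simp add: TVinv_def)
qed

lemma TVinv_TVdual: "TVinv m n r b \<subseteq> TVdual m n r" by (auto simp: TVinv_def)

theorem proposition3p25:
  fixes m n r :: nat and b :: "nat \<Rightarrow> nat \<Rightarrow> complex"
  assumes "form_even m n b" and "form_supersym m n b" and "form_nondeg m n b"
  shows "bij_betw (Psi m n r) (TVinv m n r b) (GammaOSp m n r b)
    \<and> (\<forall>c\<in>TVinv m n r b. \<forall>d\<in>TVinv m n r b. Psi m n r (tv_add c d) = tp_add (Psi m n r c) (Psi m n r d))
    \<and> (\<forall>a\<in>gcarrier. \<forall>c\<in>TVinv m n r b. Psi m n r (tv_smul a c) = tp_smul a (Psi m n r c))"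
proof (intro conjI ballI)
  show "bij_betw (Psi m n r) (TVinv m n r b) (GammaOSp m n r b)"
    unfolding bij_betw_def
  proof
    show "inj_on (Psi m n r) (TVinv m n r b)" by (rule inj_on_subset[OF Psi_inj TVinv_TVdual])
    show "Psi m n r ` TVinv m n r b = GammaOSp m n r b"
    proof
      show "Psi m n r ` TVinv m n r b \<subseteq> GammaOSp m n r b"
      proof
        fix F assume "F \<in> Psi m n r ` TVinv m n r b"
        then obtain c where c: "c \<in> TVinv m n r b" and F: "F = Psi m n r c" by blast
        have cd: "c \<in> TVdual m n r" using c by (simp add: TVinv_def)
        have "F \<in> Gamma m n r" unfolding Gamma_def F using Psi_TP[OF cd] Psi_Rhat[OF cd] by blast
        thus "F \<in> GammaOSp m n r b" unfolding GammaOSp_def F using Psi_Lhat[OF c] by auto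
      qed
      show "GammaOSp m n r b \<subseteq> Psi m n r ` TVinv m n r b"
      proof
        fix F assume F: "F \<in> GammaOSp m n r b"
        have "F = Psi m n r (cF m n r F)" by (rule Gamma_Psi) (use F in \<open>simp add: GammaOSp_def\<close>)
        thus "F \<in> Psi m n r ` TVinv m n r b" using cF_TVinv[OF F] by blast
      qed
    qed
  qed
  show "Psi m n r (tv_add c d) = tp_add (Psi m n r c) (Psi m n r d)" for c d by (rule Psi_add)
  show "Psi m n r (tv_smul a c) = tp_smul a (Psi m n r c)" for a c by (rule Psi_smul)
qed

end
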